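(* Let $f:\mathbb{R}^{3}\to\mathbb{R}$ be normal. Then for all $x,y,z\in\mathbb{R}$ and $k_{1},k_{2},k_{3}\neq0$: (a) the limits $A(k_{1},y,z)=\lim_{r\to\infty}\int_{-r}^{r}f(x,y,z)e^{-ik_{1}x}dx$, $B(x,k_{2},z)=\lim_{r\to\infty}\int_{-r}^{r}f(x,y,z)e^{-ik_{2}y}dy$, $C(x,y,k_{3})=\lim_{r\to\infty}\int_{-r}^{r}f(x,y,z)e^{-ik_{3}z}dz$ all exist, and $(y,z)\mapsto A(k_{1},y,z)$, $(x,z)\mapsto B(x,k_{2},z)$, $(x,y)\mapsto C(x,y,k_{3})$ are of moderate decrease $3$ (bounded by a constant times $|(\cdot,\cdot)|^{-3}$ for $|(\cdot,\cdot)|>1$); (b) the limits $F(k_{1},k_{2},z)=\lim_{r,s\to\infty}\int_{-r}^{r}\int_{-s}^{s}f(x,y,z)e^{-ik_{1}x}e^{-ik_{2}y}dxdy$, $G(k_{1},y,k_{3})=\lim_{r,s\to\infty}\int_{-r}^{r}\int_{-s}^{s}f(x,y,z)e^{-ik_{1}x}e^{-ik_{3}z}dxdz$, $H(x,k_{2},k_{3})=\lim_{r,s\to\infty}\int_{-r}^{r}\int_{-s}^{s}f(x,y,z)e^{-ik_{2}y}e^{-ik_{3}z}dydz$ all exist, and $z\mapsto F(k_{1},k_{2},z)$, $y\mapsto G(k_{1},y,k_{3})$, $x\mapsto H(x,k_{2},k_{3})$ are of moderate decrease (bounded by a constant times the inverse square of the variable for its absolute value $>1$); (c) $F(k_{1},k_{2},z)=\int_{-\infty}^{\infty}A(k_{1},y,z)e^{-ik_{2}y}dy$,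 and the corresponding identities hold for the other functions obtained by integrating out variables in the same way, namely $F(k_{1},k_{2},z)=\int_{-\infty}^{\infty}B(x,k_{2},z)e^{-ik_{1}x}dx$, $G(k_{1},y,k_{3})=\int_{-\infty}^{\infty}A(k_{1},y,z)e^{-ik_{3}z}dz=\int_{-\infty}^{\infty}C(x,y,k_{3})e^{-ik_{1}x}dx$, $H(x,k_{2},k_{3})=\int_{-\infty}^{\infty}B(x,k_{2},z)e^{-ik_{3}z}dz=\int_{-\infty}^{\infty}C(x,y,k_{3})e^{-ik_{2}y}dy$.
   Context: One-variable: a smooth $g:\mathbb{R}\setminus V\to\mathbb{R}$, $V$ bounded closed, is analytic at infinity if there exist $\epsilon_{1},\epsilon_{2}>0$ with $g(1/t)=\sum_{n\geq1}a_{n}t^{n}$ on $(0,\epsilon_{1})$ and $g(1/t)=\sum_{n\geq1}b_{n}t^{n}$ on $(-\epsilon_{2},0)$, real coefficients, both series absolutely convergent there. A one-variable function is of moderate decrease if $|g(t)|\leq C/t^{2}$ for $|t|>1$. Two variables: for smooth $h:\mathbb{R}^{2}\setminus W\to\mathbb{R}$, $W$ closed bounded: very moderate decrease means $|h(u,v)|\leq C/|(u,v)|$ for $|(u,v)|>1$; moderate decrease $n$ means $|h|\leq C/|(u,v)|^{n}$ for $|(u,v)|>1$ (moderate decrease means $n=2$). With fibres $h_{u}(v)=h(u,v)$, $h_{v}(u)=h(u,v)$, $h$ is normal if (i) every $h_{u}$ is analytic at infinity; (ii) every $h_{v}$ is analytic at infinity; (iii) $h$ is of very moderate decrease; (iv)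 $\partial h/\partial u$, $\partial h/\partial v$ are of moderate decrease; (v) there is a uniform bound on the number of zeros of $h_{u},(h_{u})',(h_{u})'',h_{v},(h_{v})',(h_{v})''$. Three variables: smooth $f:\mathbb{R}^{3}\to\mathbb{R}$ is of very moderate decrease if $|f(x,y,z)|\leq C/|(x,y,z)|$ for $|(x,y,z)|>1$, of moderate decrease $n$ ($n\geq2$) if $|f|\leq C/|(x,y,z)|^{n}$ there. Fibres: $f_{x}(y,z)=f(x,y,z)$ etc., and $f_{x,y}(z)=f(x,y,z)$, $f_{x,z}(y)$, $f_{y,z}(x)$ similarly, with derivatives in the free variable. $f$ is normal if: (i) for every $x$, $f_{x}(y,z)$ is normal; (ii) for every $y$, $f_{y}(x,z)$ is normal; (iii) for every $z$, $f_{z}(x,y)$ is normal; (iv) $f$ is of very moderate decrease; (v) for $i+j+k\geq1$, $\frac{\partial^{i+j+k}f}{\partial x^{i}\partial y^{j}\partial z^{k}}$ is of moderate decrease $i+j+k+1$; (vi) there is a uniform bound on the number of zeros of $f_{x,y}$ and its first four derivatives, and similarly for $f_{x,z}$, $f_{y,z}$. *)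

theory Defs
  imports "HOL-Analysis.Analysis"
begin

text \<open>Analytic at infinity (for functions defined on all of R, i.e. V empty;
  coefficients a n, b n stand for the coefficients of t^(n+1), n >= 0).\<close>
definition analytic_at_infinity :: "(real \<Rightarrow> real) \<Rightarrow> bool" where
  "analytic_at_infinity g \<longleftrightarrow>
     (\<exists>\<epsilon>1>0. \<exists>\<epsilon>2>0. \<exists>a b :: nat \<Rightarrow> real.
        (\<forall>t. 0 < t \<and> t < \<epsilon>1 \<longrightarrow>
             summable (\<lambda>n. \<bar>a n * t ^ Suc n\<bar>) \<and> (\<lambda>n. a n * t ^ Suc n) sums g (1 / t)) \<and>
        (\<forall>t. - \<epsilon>2 < t \<and> t < 0 \<longrightarrow>
             summable (\<lambda>n. \<bar>b n * t ^ Suc n\<bar>) \<and> (\<lambda>n. b n * t ^ Suc n) sums g (1 / t)))"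

definition zeros_bounded_by :: "nat \<Rightarrow> (real \<Rightarrow> real) \<Rightarrow> bool" where
  "zeros_bounded_by N g \<longleftrightarrow> finite {t. g t = 0} \<and> card {t. g t = 0} \<le> N"

section \<open>Two variables (W empty); norm on real \<times> real is the Euclidean norm\<close>

definition normal2 :: "(real \<times> real \<Rightarrow> real) \<Rightarrow> bool" where
  "normal2 h \<longleftrightarrow>
     (\<forall>u. analytic_at_infinity (\<lambda>v. h (u, v))) \<and>
     (\<forall>v. analytic_at_infinity (\<lambda>u. h (u, v))) \<and>
     (\<exists>C. \<forall>p. norm p > 1 \<longrightarrow> \<bar>h p\<bar> \<le> C / norm p) \<and>
     (\<exists>C. \<forall>u v. norm (u, v) > 1 \<longrightarrow>
          \<bar>deriv (\<lambda>t. h (t, v)) u\<bar> \<le> C / (norm (u, v))\<^sup>2) \<and>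
     (\<exists>C. \<forall>u v. norm (u, v) > 1 \<longrightarrow>
          \<bar>deriv (\<lambda>t. h (u, t)) v\<bar> \<le> C / (norm (u, v))\<^sup>2) \<and>
     (\<exists>N. \<forall>u v. \<forall>m \<le> 2.
          zeros_bounded_by N ((deriv ^^ m) (\<lambda>t. h (u, t))) \<and>
          zeros_bounded_by N ((deriv ^^ m) (\<lambda>t. h (t, v))))"

datatype var3 = VX | VY | VZ

fun pd :: "var3 \<Rightarrow> (real \<times> real \<times> real \<Rightarrow> real) \<Rightarrow> (real \<times> real \<times> real \<Rightarrow> real)" where
  "pd VX g = (\<lambda>(x, y, z). deriv (\<lambda>t. g (t, y, z)) x)"
| "pd VY g = (\<lambda>(x, y, z). deriv (\<lambda>t. g (x, t, z)) y)"
| "pd VZ g = (\<lambda>(x, y, z). deriv (\<lambda>t. g (x, y, t)) z)"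

fun pdw :: "var3 list \<Rightarrow> (real \<times> real \<times> real \<Rightarrow> real) \<Rightarrow> (real \<times> real \<times> real \<Rightarrow> real)" where
  "pdw [] g = g"
| "pdw (d # w) g = pd d (pdw w g)"

definition smooth3 :: "(real \<times> real \<times> real \<Rightarrow> real) \<Rightarrow> bool" where
  "smooth3 g \<longleftrightarrow>
     (\<forall>w. continuous_on UNIV (pdw w g) \<and>
        (\<forall>x y z. (\<lambda>t. pdw w g (t, y, z)) differentiable (at x) \<and>
                 (\<lambda>t. pdw w g (x, t, z)) differentiable (at y) \<and>
                 (\<lambda>t. pdw w g (x, y, t)) differentiable (at z)))"

definition partial3 :: "nat \<Rightarrow> nat \<Rightarrow> nat \<Rightarrow> (real \<times> real \<times> real \<Rightarrow> real) \<Rightarrow> (real \<times> real \<times> real \<Rightarrow> real)" where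
  "partial3 i j k g = pdw (replicate i VX @ replicate j VY @ replicate k VZ) g"

definition normal3 :: "(real \<times> real \<times> real \<Rightarrow> real) \<Rightarrow> bool" where
  "normal3 f \<longleftrightarrow>
     smooth3 f \<and>
     (\<forall>x. normal2 (\<lambda>(y, z). f (x, y, z))) \<and>
     (\<forall>y. normal2 (\<lambda>(x, z). f (x, y, z))) \<and>
     (\<forall>z. normal2 (\<lambda>(x, y). f (x, y, z))) \<and>
     (\<exists>C. \<forall>p. norm p > 1 \<longrightarrow> \<bar>f p\<bar> \<le> C / norm p) \<and>
     (\<forall>i j k. i + j + k \<ge> 1 \<longrightarrow>
        (\<exists>C. \<forall>p. norm p > 1 \<longrightarrow> \<bar>partial3 i j k f p\<bar> \<le> C / norm p ^ (i + j + k + 1))) \<and>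
     (\<exists>N. \<forall>a b. \<forall>m \<le> 4.
          zeros_bounded_by N ((deriv ^^ m) (\<lambda>z. f (a, b, z))) \<and>
          zeros_bounded_by N ((deriv ^^ m) (\<lambda>y. f (a, y, b))) \<and>
          zeros_bounded_by N ((deriv ^^ m) (\<lambda>x. f (x, a, b))))"

definition ef :: "real \<Rightarrow> real \<Rightarrow> complex" where
  "ef k t = exp (- \<i> * complex_of_real (k * t))"

definition FA :: "(real \<times> real \<times> real \<Rightarrow> real) \<Rightarrow> real \<Rightarrow> real \<Rightarrow> real \<Rightarrow> complex" where
  "FA f k1 y z = Lim at_top (\<lambda>r. integral {-r..r} (\<lambda>x. complex_of_real (f (x, y, z)) * ef k1 x))"
definition FB :: "(real \<times> real \<times> real \<Rightarrow> real) \<Rightarrow> real \<Rightarrow> real \<Rightarrow> real \<Rightarrow> complex" where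
  "FB f x k2 z = Lim at_top (\<lambda>r. integral {-r..r} (\<lambda>y. complex_of_real (f (x, y, z)) * ef k2 y))"
definition FC :: "(real \<times> real \<times> real \<Rightarrow> real) \<Rightarrow> real \<Rightarrow> real \<Rightarrow> real \<Rightarrow> complex" where
  "FC f x y k3 = Lim at_top (\<lambda>r. integral {-r..r} (\<lambda>z. complex_of_real (f (x, y, z)) * ef k3 z))"

definition FF :: "(real \<times> real \<times> real \<Rightarrow> real) \<Rightarrow> real \<Rightarrow> real \<Rightarrow> real \<Rightarrow> complex" where
  "FF f k1 k2 z = Lim (at_top \<times>\<^sub>F at_top) (\<lambda>(r, s). integral {-r..r} (\<lambda>y.
      integral {-s..s} (\<lambda>x. complex_of_real (f (x, y, z)) * ef k1 x * ef k2 y)))"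
definition FG :: "(real \<times> real \<times> real \<Rightarrow> real) \<Rightarrow> real \<Rightarrow> real \<Rightarrow> real \<Rightarrow> complex" where
  "FG f k1 y k3 = Lim (at_top \<times>\<^sub>F at_top) (\<lambda>(r, s). integral {-r..r} (\<lambda>z.
      integral {-s..s} (\<lambda>x. complex_of_real (f (x, y, z)) * ef k1 x * ef k3 z)))"
definition FH :: "(real \<times> real \<times> real \<Rightarrow> real) \<Rightarrow> real \<Rightarrow> real \<Rightarrow> real \<Rightarrow> complex" where
  "FH f x k2 k3 = Lim (at_top \<times>\<^sub>F at_top) (\<lambda>(r, s). integral {-r..r} (\<lambda>z.
      integral {-s..s} (\<lambda>y. complex_of_real (f (x, y, z)) * ef k2 y * ef k3 z)))"

end

theory Submission
  imports Defs "HOL-Real_Asymp.Real_Asymp"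
begin

lemma ef_norm[simp]: "norm (ef k t) = 1"
  unfolding ef_def by (simp add: norm_exp_eq_Re)

lemma ef_deriv: "((ef k) has_vector_derivative (- \<i> * of_real k * ef k t)) (at t within S)"
proof -
  have "((\<lambda>z. exp (- \<i> * of_real k * z)) has_field_derivative
     (exp (- \<i> * of_real k * of_real t) * (- \<i> * of_real k))) (at (of_real t))"
    by (auto intro!: derivative_eq_intros)
  from has_vector_derivative_real_field[OF this, of S]
  show ?thesis unfolding ef_def by (simp add: mult_ac)
qed

lemma continuous_on_ef[continuous_intros]: "continuous_on S (ef k)"
  unfolding ef_def by (intro continuous_intros)

lemma IBP1:
  fixes h h' :: "real \<Rightarrow> real"
  assumes k: "k \<noteq> 0" and ab: "a \<le> b"
    and d: "\<And>t. (h has_real_derivative h' t) (at t)"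
    and c: "continuous_on UNIV h'"
  shows "(\<lambda>t. of_real (h t) * ef k t) integrable_on {a..b}"
    and "integral {a..b} (\<lambda>t. of_real (h t) * ef k t) =
       (integral {a..b} (\<lambda>t. of_real (h' t) * ef k t) - (of_real (h b) * ef k b - of_real (h a) * ef k a)) / (\<i> * of_real k)"
proof -
  define P where "P t = complex_of_real (h t) * ef k t" for t
  define Q where "Q t = complex_of_real (h' t) * ef k t" for t
  have hv: "((\<lambda>t. complex_of_real (h t)) has_vector_derivative complex_of_real (h' t)) (at t within S)" for t S
    using d[of t] unfolding has_real_derivative_iff_has_vector_derivative[symmetric]
    by (metis has_field_derivative_at_within has_real_derivative_iff_has_vector_derivative
          has_vector_derivative_of_real)
  have Pd: "(P has_vector_derivative (Q t - \<i> * of_real k * P t)) (at t within {a..b})" for t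
  proof -
    have "((\<lambda>t. complex_of_real (h t) * ef k t) has_vector_derivative
       (complex_of_real (h t) * (- \<i> * of_real k * ef k t) + complex_of_real (h' t) * ef k t)) (at t within {a..b})"
      by (rule has_vector_derivative_mult[OF hv ef_deriv])
    then show ?thesis unfolding P_def Q_def by (simp add: algebra_simps)
  qed
  have ftc: "((\<lambda>t. Q t - \<i> * of_real k * P t) has_integral (P b - P a)) {a..b}"
    by (rule fundamental_theorem_of_calculus[OF ab Pd])
  have hc: "continuous_on UNIV h"
    using d by (metis DERIV_isCont continuous_at_imp_continuous_on)
  have Qi: "(Q has_integral integral {a..b} Q) {a..b}"
    unfolding Q_def by (intro integrable_integral integrable_continuous_real continuous_intros
        continuous_on_subset[OF c]) auto
  have "((\<lambda>t. (Q t - (Q t - \<i> * of_real k * P t)) / (\<i> * of_real k)) has_integral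
      (integral {a..b} Q - (P b - P a)) / (\<i> * of_real k)) {a..b}"
    by (intro has_integral_divide has_integral_diff Qi ftc)
  moreover have "(\<lambda>t. (Q t - (Q t - \<i> * of_real k * P t)) / (\<i> * of_real k)) = P"
    using k by (auto simp: field_simps)
  ultimately have "(P has_integral (integral {a..b} Q - (P b - P a)) / (\<i> * of_real k)) {a..b}"
    by simp
  then show "(\<lambda>t. of_real (h t) * ef k t) integrable_on {a..b}"
    and "integral {a..b} (\<lambda>t. of_real (h t) * ef k t) =
       (integral {a..b} (\<lambda>t. of_real (h' t) * ef k t) - (of_real (h b) * ef k b - of_real (h a) * ef k a)) / (\<i> * of_real k)"
    unfolding P_def Q_def by (auto dest: integral_unique)
qed

lemma arctan_int:
  fixes \<rho> :: real
  assumes "\<rho> > 0" "a \<le> b"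
  shows "((\<lambda>x. 1 / (x\<^sup>2 + \<rho>\<^sup>2)) has_integral (arctan (b / \<rho>) - arctan (a / \<rho>)) / \<rho>) {a..b}"
proof -
  have "((\<lambda>x. arctan (x / \<rho>) / \<rho>) has_vector_derivative 1 / (x\<^sup>2 + \<rho>\<^sup>2)) (at x within {a..b})" for x
  proof -
    have "((\<lambda>x. arctan (x / \<rho>) / \<rho>) has_real_derivative (inverse (1 + (x/\<rho>)\<^sup>2) * (1 / \<rho>)) / \<rho>) (at x within {a..b})"
      using assms(1) by (auto intro!: derivative_eq_intros)
    moreover have "(inverse (1 + (x/\<rho>)\<^sup>2) * (1 / \<rho>)) / \<rho> = 1 / (x\<^sup>2 + \<rho>\<^sup>2)"
    proof -
      have "x\<^sup>2 + \<rho>\<^sup>2 > 0" using assms(1) by (simp add: add_nonneg_pos)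
      moreover have e: "1 + (x/\<rho>)\<^sup>2 = (x\<^sup>2+\<rho>\<^sup>2)/\<rho>\<^sup>2"
        using assms(1) by (simp add: field_simps power_divide)
      ultimately show ?thesis using assms(1) by (simp add: e power2_eq_square)
    qed
    ultimately show ?thesis by (simp add: has_real_derivative_iff_has_vector_derivative)
  qed
  from fundamental_theorem_of_calculus[OF assms(2) this] show ?thesis
    by (simp add: diff_divide_distrib)
qed

lemma onepsq[simp]: "(1::real) + x\<^sup>2 \<noteq> 0" "0 < (1::real) + x\<^sup>2"
  by (smt (verit) zero_le_power2)+

lemma ball_sub_interval:
  fixes a b B :: real
  assumes "ball 0 B \<subseteq> cbox a b" "B > 0"
  shows "a \<le> -B" "B \<le> b"
proof -
  have "closure (ball 0 B) \<subseteq> {a..b}"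
    using assms by (intro closure_minimal) auto
  then have "cball 0 B \<subseteq> {a..b}" using assms(2) by simp
  moreover have "-B \<in> cball 0 B" "B \<in> cball 0 B" using assms(2) by (auto simp: dist_real_def)
  ultimately have "-B \<in> {a..b}" "B \<in> {a..b}" by blast+
  then show "a \<le> -B" "B \<le> b" by auto
qed

lemma arctan_int1:
  fixes a b :: real
  assumes "a \<le> b"
  shows "((\<lambda>x. 1 / (1 + x\<^sup>2)) has_integral (arctan b - arctan a)) {a..b}"
  using arctan_int[of 1 a b] assms by (simp add: add.commute)

lemma b_int: "((\<lambda>x::real. 1 / (1 + x\<^sup>2)) has_integral pi) UNIV"
proof (subst has_integral_alt', intro conjI allI impI)
  fix a b :: real
  show "(\<lambda>x. if x \<in> UNIV then 1 / (1 + x\<^sup>2) else 0) integrable_on cbox a b"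
    by (auto intro!: integrable_continuous_real continuous_intros simp: add_pos_nonneg)
next
  fix e :: real assume e: "e > 0"
  have "\<forall>\<^sub>F x in at_top. arctan x > pi/2 - e/2"
    using tendsto_arctan_at_top e by (intro order_tendstoD) auto
  then obtain B where B: "\<And>x. x \<ge> B \<Longrightarrow> arctan x > pi/2 - e/2"
    by (auto simp: eventually_at_top_linorder)
  show "\<exists>B>0. \<forall>a b. ball 0 B \<subseteq> cbox a b \<longrightarrow>
      norm (integral (cbox a b) (\<lambda>x. if x \<in> UNIV then 1 / (1 + x\<^sup>2) else 0) - pi) < e"
  proof (intro exI[of _ "max B 1"] conjI allI impI)
    fix a b :: real assume "ball 0 (max B 1) \<subseteq> cbox a b"
    from ball_sub_interval[OF this] have ab: "a \<le> - max B 1" "max B 1 \<le> b" by auto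
    have "integral (cbox a b) (\<lambda>x. if x \<in> UNIV then 1 / (1 + x\<^sup>2) else 0) = arctan b - arctan a"
      using arctan_int1[of a b] ab by (auto intro!: integral_unique)
    moreover have "arctan b > pi/2 - e/2" "arctan (-a) > pi/2 - e/2"
      using B ab by auto
    moreover have "arctan b < pi/2" "arctan (-a) < pi/2" using arctan_bounded by auto
    ultimately show "norm (integral (cbox a b) (\<lambda>x. if x \<in> UNIV then 1 / (1 + x\<^sup>2) else 0) - pi) < e"
      by (auto simp: arctan_minus)
  qed simp
qed

lemma symlim:
  fixes g :: "real \<Rightarrow> 'a::banach"
  assumes "g integrable_on UNIV"
  shows "((\<lambda>r. integral {-r..r} g) \<longlongrightarrow> integral UNIV g) at_top"
proof (rule tendstoI)
  fix e :: real assume e: "e > 0"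
  have "(g has_integral integral UNIV g) UNIV" using assms by auto
  then have "\<forall>e>0. \<exists>B>0. \<forall>a b. ball 0 B \<subseteq> cbox a b \<longrightarrow>
      norm (integral (cbox a b) (\<lambda>x. if x \<in> UNIV then g x else 0) - integral UNIV g) < e"
    by (subst (asm) has_integral_alt') blast
  with e obtain B where B: "B > 0" "\<And>a b. ball 0 B \<subseteq> cbox a b \<Longrightarrow>
      norm (integral (cbox a b) g - integral UNIV g) < e" by auto
  show "\<forall>\<^sub>F r in at_top. dist (integral {-r..r} g) (integral UNIV g) < e"
    unfolding eventually_at_top_linorder
  proof (intro exI[of _ B] allI impI)
    fix r assume "r \<ge> B"
    then have "ball 0 B \<subseteq> cbox (-r) r" by (auto simp: dist_real_def)
    from B(2)[OF this] show "dist (integral {-r..r} g) (integral UNIV g) < e"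
      by (simp add: dist_norm)
  qed
qed

lemma int_bnd:
  fixes g :: "real \<Rightarrow> 'a::euclidean_space"
  assumes "g integrable_on {a..b}" "a \<le> b" "\<And>x. norm (g x) \<le> B / (1 + x\<^sup>2)"
  shows "norm (integral {a..b} g) \<le> B * (arctan b - arctan a)"
proof -
  have hi: "((\<lambda>x. B * (1 / (1 + x\<^sup>2))) has_integral B * (arctan b - arctan a)) {a..b}"
    by (intro has_integral_mult_right arctan_int1 assms)
  have "norm (integral {a..b} g) \<le> integral {a..b} (\<lambda>x. B * (1 / (1 + x\<^sup>2)))"
    using assms hi by (intro integral_norm_bound_integral) auto
  also have "\<dots> = B * (arctan b - arctan a)" using hi by (rule integral_unique)
  finally show ?thesis .
qed

lemma tail:
  fixes g :: "real \<Rightarrow> 'a::euclidean_space"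
  assumes gi: "g integrable_on UNIV" and gb: "\<And>x. norm (g x) \<le> B / (1 + x\<^sup>2)" and r: "r \<ge> 0"
  shows "norm (integral UNIV g - integral {-r..r} g) \<le> B * (pi - 2 * arctan r)"
proof -
  have B: "B \<ge> 0" using gb[of 0] by (smt (verit) norm_ge_zero power_zero_numeral zero_power2 div_by_1)
  have sub: "g integrable_on {a..b}" for a b
    using gi integrable_on_subinterval by (metis subset_UNIV)
  have ev: "norm (integral {-R..R} g - integral {-r..r} g) \<le> B * (pi - 2 * arctan r)" if R: "R \<ge> r" for R
  proof -
    have "integral {-R..R} g = integral {-R..-r} g + integral {-r..R} g"
      using R r by (intro Henstock_Kurzweil_Integration.integral_combine[symmetric, OF _ _ sub]) auto
    moreover have "integral {-r..R} g = integral {-r..r} g + integral {r..R} g"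
      using R r by (intro Henstock_Kurzweil_Integration.integral_combine[symmetric, OF _ _ sub]) auto
    ultimately have eq: "integral {-R..R} g - integral {-r..r} g = integral {-R..-r} g + integral {r..R} g"
      by simp
    have n1: "norm (integral {-R..-r} g) \<le> B * (arctan (-r) - arctan (-R))"
      using R by (intro int_bnd sub gb) auto
    have n2: "norm (integral {r..R} g) \<le> B * (arctan R - arctan r)"
      using R by (intro int_bnd sub gb) auto
    have "norm (integral {-R..R} g - integral {-r..r} g) \<le> B * (arctan (-r) - arctan (-R)) + B * (arctan R - arctan r)"
      unfolding eq using n1 n2 by (intro norm_triangle_le add_mono)
    also have "\<dots> = B * (2 * arctan R - 2 * arctan r)" by (simp add: arctan_minus algebra_simps)
    also have "\<dots> \<le> B * (pi - 2 * arctan r)"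
      using B arctan_bounded[of R] by (intro mult_left_mono) auto
    finally show ?thesis .
  qed
  have "((\<lambda>R. norm (integral {-R..R} g - integral {-r..r} g)) \<longlongrightarrow> norm (integral UNIV g - integral {-r..r} g)) at_top"
    by (intro tendsto_intros symlim gi)
  then show ?thesis
    by (rule tendsto_upperbound) (auto simp: eventually_at_top_linorder intro!: exI[of _ r] ev)
qed

lemma tail_lim: "((\<lambda>r. pi - 2 * arctan r) \<longlongrightarrow> 0) at_top"
proof -
  have "((\<lambda>r. pi - 2 * arctan r) \<longlongrightarrow> pi - 2 * (pi/2)) at_top"
    by (intro tendsto_intros tendsto_arctan_at_top)
  then show ?thesis by simp
qed

lemma cont_bound_integrable:
  fixes f :: "real \<Rightarrow> 'a::euclidean_space"
  assumes "continuous_on UNIV f" "\<And>x. norm (f x) \<le> B / (1 + x\<^sup>2)"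
  shows "f integrable_on UNIV"
proof (rule measurable_bounded_by_integrable_imp_integrable)
  show "f \<in> borel_measurable (lebesgue_on UNIV)"
    using assms(1) by (intro continuous_imp_measurable_on_sets_lebesgue) auto
  show "(\<lambda>x. B / (1 + x\<^sup>2)) integrable_on UNIV"
  proof -
    have "((\<lambda>x. B * (1 / (1 + x\<^sup>2))) has_integral B * pi) UNIV"
      by (rule has_integral_mult_right[OF b_int])
    then show ?thesis by (simp add: integrable_on_def) blast
  qed
qed (use assms in simp_all)

lemma norm_hef: "norm (complex_of_real (h r) * ef k r) = \<bar>h r\<bar>"
  by (simp add: norm_mult)

lemma bdry_lim:
  fixes h :: "real \<Rightarrow> real"
  assumes "(h \<longlongrightarrow> 0) at_top" "(h \<longlongrightarrow> 0) at_bot"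
  shows "((\<lambda>r. of_real (h r) * ef k r - of_real (h (-r)) * ef k (-r)) \<longlongrightarrow> 0) at_top"
proof -
  have "((\<lambda>r. \<bar>h r\<bar>) \<longlongrightarrow> 0) at_top" by (rule tendsto_rabs_zero[OF assms(1)])
  then have "((\<lambda>r. norm (of_real (h r) * ef k r)) \<longlongrightarrow> 0) at_top" by (simp only: norm_hef)
  then have a: "((\<lambda>r. of_real (h r) * ef k r) \<longlongrightarrow> 0) at_top"
    by (rule tendsto_norm_zero_cancel)
  have "((\<lambda>r. h (-r)) \<longlongrightarrow> 0) at_top"
    by (rule filterlim_compose[OF assms(2) filterlim_uminus_at_bot_at_top])
  then have "((\<lambda>r. \<bar>h (-r)\<bar>) \<longlongrightarrow> 0) at_top" by (rule tendsto_rabs_zero)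
  then have "((\<lambda>r. norm (of_real (h (-r)) * ef k (-r))) \<longlongrightarrow> 0) at_top" by (simp only: norm_hef)
  then have b: "((\<lambda>r. of_real (h (-r)) * ef k (-r)) \<longlongrightarrow> 0) at_top"
    by (rule tendsto_norm_zero_cancel)
  from tendsto_diff[OF a b] show ?thesis by simp
qed

lemma IBP_lim:
  fixes h h' :: "real \<Rightarrow> real"
  assumes k: "k \<noteq> 0" and d: "\<And>t. (h has_real_derivative h' t) (at t)"
    and c: "continuous_on UNIV h'"
    and z: "(h \<longlongrightarrow> 0) at_top" "(h \<longlongrightarrow> 0) at_bot"
    and L: "((\<lambda>r. integral {-r..r} (\<lambda>t. of_real (h' t) * ef k t)) \<longlongrightarrow> L) at_top"
  shows "((\<lambda>r. integral {-r..r} (\<lambda>t. of_real (h t) * ef k t)) \<longlongrightarrow> L / (\<i> * of_real k)) at_top"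
proof -
  have ev: "\<forall>\<^sub>F r in at_top. (integral {-r..r} (\<lambda>t. of_real (h' t) * ef k t) -
      (of_real (h r) * ef k r - of_real (h (-r)) * ef k (-r))) / (\<i> * of_real k) =
      integral {-r..r} (\<lambda>t. of_real (h t) * ef k t)"
    unfolding eventually_at_top_linorder
    by (intro exI[of _ 0] allI impI IBP1(2)[symmetric, OF k _ d c]) auto
  have "((\<lambda>r. integral {-r..r} (\<lambda>t. of_real (h' t) * ef k t) -
      (of_real (h r) * ef k r - of_real (h (-r)) * ef k (-r))) \<longlongrightarrow> L - 0) at_top"
    by (rule tendsto_diff[OF L bdry_lim[OF z]])
  then have "((\<lambda>r. (integral {-r..r} (\<lambda>t. of_real (h' t) * ef k t) -
      (of_real (h r) * ef k r - of_real (h (-r)) * ef k (-r))) / (\<i> * of_real k)) \<longlongrightarrow> (L - 0) / (\<i> * of_real k)) at_top"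
    by (rule tendsto_divide[OF _ tendsto_const]) (use k in auto)
  then show ?thesis using tendsto_cong[OF ev] by simp
qed

lemma L1:
  fixes h0 h1 h2 h3 :: "real \<Rightarrow> real"
  assumes k: "k \<noteq> 0"
    and d1: "\<And>t. (h0 has_real_derivative h1 t) (at t)"
    and d2: "\<And>t. (h1 has_real_derivative h2 t) (at t)"
    and d3: "\<And>t. (h2 has_real_derivative h3 t) (at t)"
    and c3: "continuous_on UNIV h3"
    and z0: "(h0 \<longlongrightarrow> 0) at_top" "(h0 \<longlongrightarrow> 0) at_bot"
    and z1: "(h1 \<longlongrightarrow> 0) at_top" "(h1 \<longlongrightarrow> 0) at_bot"
    and z2: "(h2 \<longlongrightarrow> 0) at_top" "(h2 \<longlongrightarrow> 0) at_bot"
    and b3: "\<And>t. \<bar>h3 t\<bar> \<le> B / (1 + t\<^sup>2)"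
  shows "(\<lambda>t. of_real (h3 t) * ef k t) integrable_on UNIV"
    and "((\<lambda>r. integral {-r..r} (\<lambda>t. of_real (h0 t) * ef k t)) \<longlongrightarrow>
          integral UNIV (\<lambda>t. of_real (h3 t) * ef k t) / (\<i> * of_real k) ^ 3) at_top"
proof -
  show i3: "(\<lambda>t. of_real (h3 t) * ef k t) integrable_on UNIV"
    by (rule cont_bound_integrable[where B=B]) (auto intro!: continuous_intros c3 simp: norm_mult b3)
  have c2: "continuous_on UNIV h2" using d3 by (metis DERIV_isCont continuous_at_imp_continuous_on)
  have c1: "continuous_on UNIV h1" using d2 by (metis DERIV_isCont continuous_at_imp_continuous_on)
  have "((\<lambda>r. integral {-r..r} (\<lambda>t. of_real (h0 t) * ef k t)) \<longlongrightarrow>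
          integral UNIV (\<lambda>t. of_real (h3 t) * ef k t) / (\<i> * of_real k) / (\<i> * of_real k) / (\<i> * of_real k)) at_top"
    by (intro IBP_lim[OF k d1 c1 z0] IBP_lim[OF k d2 c2 z1] IBP_lim[OF k d3 c3 z2] symlim i3)
  then show "((\<lambda>r. integral {-r..r} (\<lambda>t. of_real (h0 t) * ef k t)) \<longlongrightarrow>
          integral UNIV (\<lambda>t. of_real (h3 t) * ef k t) / (\<i> * of_real k) ^ 3) at_top"
    by (simp add: power3_eq_cube field_simps)
qed

lemma lor_bound:
  fixes g :: "real \<Rightarrow> complex"
  assumes gi: "g integrable_on {-r..r}" and r: "r \<ge> 0" and A: "A \<ge> 0"
    and gb: "\<And>y. norm (g y) \<le> A / (1 + x\<^sup>2 + y\<^sup>2)"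
  shows "norm (integral {-r..r} g) \<le> A * pi / sqrt (1 + x\<^sup>2)"
proof -
  define \<rho> where "\<rho> = sqrt (1 + x\<^sup>2)"
  have \<rho>: "\<rho> > 0" "\<rho>\<^sup>2 = 1 + x\<^sup>2" unfolding \<rho>_def by (auto simp: add_pos_nonneg)
  have hi: "((\<lambda>y. A * (1 / (y\<^sup>2 + \<rho>\<^sup>2))) has_integral A * ((arctan (r / \<rho>) - arctan (-r / \<rho>)) / \<rho>)) {-r..r}"
    using r \<rho> by (intro has_integral_mult_right arctan_int) auto
  have "norm (integral {-r..r} g) \<le> integral {-r..r} (\<lambda>y. A * (1 / (y\<^sup>2 + \<rho>\<^sup>2)))"
  proof (rule integral_norm_bound_integral[OF gi])
    show "(\<lambda>y. A * (1 / (y\<^sup>2 + \<rho>\<^sup>2))) integrable_on {-r..r}" using hi by blast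
    fix y show "norm (g y) \<le> A * (1 / (y\<^sup>2 + \<rho>\<^sup>2))"
      using gb[of y] \<rho>(2) by (simp add: add_ac)
  qed
  also have "\<dots> = A * ((arctan (r / \<rho>) - arctan (-r / \<rho>)) / \<rho>)" using hi by (rule integral_unique)
  also have "\<dots> = A * (2 * arctan (r / \<rho>)) / \<rho>" by (simp add: arctan_minus)
  also have "\<dots> \<le> A * pi / \<rho>"
    using \<rho> A arctan_bounded[of "r/\<rho>"] by (intro divide_right_mono mult_left_mono) auto
  finally show ?thesis unfolding \<rho>_def .
qed

lemma abs_le_sqrt: "\<bar>x\<bar> \<le> sqrt (1 + x\<^sup>2)"
  by (rule real_le_rsqrt) simp

lemma lor_bound':
  fixes g :: "real \<Rightarrow> complex"
  assumes gi: "g integrable_on {-r..r}" and r: "r \<ge> 0" and A: "A \<ge> 0" and x: "\<bar>x\<bar> \<ge> 1"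
    and gb: "\<And>y. norm (g y) \<le> A / (1 + x\<^sup>2 + y\<^sup>2)"
  shows "norm (integral {-r..r} g) \<le> A * pi / \<bar>x\<bar>"
proof -
  have "norm (integral {-r..r} g) \<le> A * pi / sqrt (1 + x\<^sup>2)" by (rule lor_bound[OF gi r A gb])
  also have "\<dots> \<le> A * pi / \<bar>x\<bar>"
    using x A abs_le_sqrt[of x] by (intro divide_left_mono mult_nonneg_nonneg) auto
  finally show ?thesis .
qed

lemma cont_param:
  fixes F :: "real \<Rightarrow> real \<Rightarrow> complex"
  assumes "continuous_on UNIV (\<lambda>p. F (fst p) (snd p))"
  shows "continuous_on UNIV (\<lambda>y. integral {a..b} (\<lambda>x. F x y))"
proof -
  have "continuous_on (UNIV \<times> cbox a b) (\<lambda>(y, x). F x y)"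
  proof -
    have "continuous_on UNIV ((\<lambda>p. F (fst p) (snd p)) \<circ> prod.swap)"
      by (intro continuous_on_compose continuous_on_swap continuous_on_subset[OF assms]) auto
    moreover have "((\<lambda>p. F (fst p) (snd p)) \<circ> prod.swap) = (\<lambda>(y, x). F x y)"
      by (auto simp: fun_eq_iff)
    ultimately show ?thesis by (metis continuous_on_subset subset_UNIV)
  qed
  from integral_continuous_on_param[OF this] show ?thesis by simp
qed

lemma cont_slice1:
  assumes "continuous_on UNIV (\<lambda>p. F (fst p) (snd p))"
  shows "continuous_on UNIV (\<lambda>x. F x y)"
proof -
  have "continuous_on UNIV (\<lambda>x. (x, y))" by (intro continuous_intros)
  from continuous_on_compose2[OF assms this] show ?thesis by simp
qed

lemma cont_slice2:
  assumes "continuous_on UNIV (\<lambda>p. F (fst p) (snd p))"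
  shows "continuous_on UNIV (\<lambda>y. F x y)"
proof -
  have "continuous_on UNIV (\<lambda>y. (x, y))" by (intro continuous_intros)
  from continuous_on_compose2[OF assms this] show ?thesis by simp
qed

lemma continuous_on_ef'[continuous_intros]: "continuous_on S g \<Longrightarrow> continuous_on S (\<lambda>x. ef k (g x))"
  unfolding ef_def by (intro continuous_intros)

lemma L2:
  fixes h0 h1 h2 h3 hy :: "real \<Rightarrow> real \<Rightarrow> real"
  assumes k1: "k1 \<noteq> 0" and k2: "k2 \<noteq> 0"
    and dx1: "\<And>x y. ((\<lambda>t. h0 t y) has_real_derivative h1 x y) (at x)"
    and dx2: "\<And>x y. ((\<lambda>t. h1 t y) has_real_derivative h2 x y) (at x)"
    and dx3: "\<And>x y. ((\<lambda>t. h2 t y) has_real_derivative h3 x y) (at x)"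
    and dy: "\<And>x y. ((\<lambda>t. h0 x t) has_real_derivative hy x y) (at y)"
    and c0: "continuous_on UNIV (\<lambda>p. h0 (fst p) (snd p))"
    and c1: "continuous_on UNIV (\<lambda>p. h1 (fst p) (snd p))"
    and c2: "continuous_on UNIV (\<lambda>p. h2 (fst p) (snd p))"
    and c3: "continuous_on UNIV (\<lambda>p. h3 (fst p) (snd p))"
    and cy: "continuous_on UNIV (\<lambda>p. hy (fst p) (snd p))"
    and A: "A \<ge> 0"
    and b0: "\<And>x y. \<bar>x\<bar> \<ge> 1 \<Longrightarrow> \<bar>h0 x y\<bar> \<le> A / \<bar>x\<bar>"
    and b1: "\<And>x y. \<bar>h1 x y\<bar> \<le> A / (1 + x\<^sup>2 + y\<^sup>2)"
    and b2: "\<And>x y. \<bar>h2 x y\<bar> \<le> A / (1 + x\<^sup>2 + y\<^sup>2)"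
    and byy: "\<And>x y. \<bar>hy x y\<bar> \<le> A / (1 + x\<^sup>2 + y\<^sup>2)"
    and b3: "\<And>x y. \<bar>h3 x y\<bar> \<le> A / ((1 + x\<^sup>2) * (1 + y\<^sup>2))"
  shows "(\<lambda>y. integral UNIV (\<lambda>x. of_real (h3 x y) * ef k1 x) / (\<i> * of_real k1) ^ 3 * ef k2 y) integrable_on UNIV" (is ?G1)
    and "((\<lambda>(r, s). integral {-r..r} (\<lambda>y. integral {-s..s} (\<lambda>x. of_real (h0 x y) * ef k1 x * ef k2 y)))
          \<longlongrightarrow> integral UNIV (\<lambda>y. integral UNIV (\<lambda>x. of_real (h3 x y) * ef k1 x) / (\<i> * of_real k1) ^ 3 * ef k2 y))
          (at_top \<times>\<^sub>F at_top)" (is ?G2)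
proof -
  define c where "c = \<i> * complex_of_real k1"
  have cn: "c \<noteq> 0" "norm c = \<bar>k1\<bar>" using k1 by (auto simp: c_def norm_mult)
  define J3 where "J3 s y = integral {-s..s} (\<lambda>x. of_real (h3 x y) * ef k1 x)" for s y
  define J where "J y = integral UNIV (\<lambda>x. of_real (h3 x y) * ef k1 x)" for y
  define bt where "bt h s y = of_real (h s y) * ef k1 s - of_real (h (-s) y) * ef k1 (-s)"
    for h :: "real \<Rightarrow> real \<Rightarrow> real" and s y
  define T where "T s = pi - 2 * arctan s" for s
  have T0: "T s \<ge> 0" for s unfolding T_def using arctan_bounded[of s] by auto
  have cx1: "continuous_on UNIV (\<lambda>x. h1 x y)" for y by (rule cont_slice1[OF c1])
  have cx2: "continuous_on UNIV (\<lambda>x. h2 x y)" for y by (rule cont_slice1[OF c2])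
  have cx3: "continuous_on UNIV (\<lambda>x. h3 x y)" for y by (rule cont_slice1[OF c3])
  have S1: "integral {-s..s} (\<lambda>x. of_real (h0 x y) * ef k1 x) =
      J3 s y / c^3 - bt h2 s y / c^3 - bt h1 s y / c^2 - bt h0 s y / c" if s: "s \<ge> 0" for s y
  proof -
    have i0: "integral {-s..s} (\<lambda>x. of_real (h0 x y) * ef k1 x) =
        (integral {-s..s} (\<lambda>x. of_real (h1 x y) * ef k1 x) - bt h0 s y) / c"
      unfolding bt_def c_def using s by (intro IBP1(2)[OF k1 _ dx1 cx1]) auto
    have i1: "integral {-s..s} (\<lambda>x. of_real (h1 x y) * ef k1 x) =
        (integral {-s..s} (\<lambda>x. of_real (h2 x y) * ef k1 x) - bt h1 s y) / c"
      unfolding bt_def c_def using s by (intro IBP1(2)[OF k1 _ dx2 cx2]) auto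
    have i2: "integral {-s..s} (\<lambda>x. of_real (h2 x y) * ef k1 x) =
        (J3 s y - bt h2 s y) / c"
      unfolding bt_def c_def J3_def using s by (intro IBP1(2)[OF k1 _ dx3 cx3]) auto
    show ?thesis unfolding i0 i1 i2 using cn by (simp add: field_simps power3_eq_cube power2_eq_square)
  qed
  have contJ3: "continuous_on UNIV (J3 s)" for s
  proof -
    have "continuous_on UNIV (\<lambda>p. complex_of_real (h3 (fst p) (snd p)) * ef k1 (fst p))"
      by (intro continuous_intros c3)
    from cont_param[of "\<lambda>x y. complex_of_real (h3 x y) * ef k1 x", OF this]
    show ?thesis unfolding J3_def[abs_def] by simp
  qed
  have contbt: "continuous_on UNIV (bt h s)" if "continuous_on UNIV (\<lambda>p. h (fst p) (snd p))" for h s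
  proof -
    have "continuous_on UNIV (\<lambda>y. h s y)" "continuous_on UNIV (\<lambda>y. h (-s) y)"
      by (rule cont_slice2[OF that])+
    then show ?thesis unfolding bt_def[abs_def] by (intro continuous_intros) auto
  qed
  have S2: "integral {-r..r} (\<lambda>y. integral {-s..s} (\<lambda>x. of_real (h0 x y) * ef k1 x * ef k2 y)) =
      integral {-r..r} (\<lambda>y. J3 s y * ef k2 y) / c^3 - integral {-r..r} (\<lambda>y. bt h2 s y * ef k2 y) / c^3
      - integral {-r..r} (\<lambda>y. bt h1 s y * ef k2 y) / c^2 - integral {-r..r} (\<lambda>y. bt h0 s y * ef k2 y) / c"
    if s: "s \<ge> 0" for r s
  proof -
    have "(\<lambda>y. integral {-s..s} (\<lambda>x. of_real (h0 x y) * ef k1 x * ef k2 y)) =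
      (\<lambda>y. J3 s y * ef k2 y / c^3 - bt h2 s y * ef k2 y / c^3 - bt h1 s y * ef k2 y / c^2 - bt h0 s y * ef k2 y / c)"
    proof
      fix y
      have "integral {-s..s} (\<lambda>x. of_real (h0 x y) * ef k1 x * ef k2 y) =
          integral {-s..s} (\<lambda>x. of_real (h0 x y) * ef k1 x) * ef k2 y"
        by (rule integral_mult_left)
      also have "\<dots> = (J3 s y / c^3 - bt h2 s y / c^3 - bt h1 s y / c^2 - bt h0 s y / c) * ef k2 y"
        by (simp only: S1[OF s])
      finally show "integral {-s..s} (\<lambda>x. of_real (h0 x y) * ef k1 x * ef k2 y) =
        J3 s y * ef k2 y / c^3 - bt h2 s y * ef k2 y / c^3 - bt h1 s y * ef k2 y / c^2 - bt h0 s y * ef k2 y / c"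
        by (simp add: algebra_simps)
    qed
    moreover have "(\<lambda>y. J3 s y * ef k2 y / c^3) integrable_on {-r..r}"
      using cn by (intro integrable_continuous_real continuous_intros continuous_on_subset[OF contJ3]) auto
    moreover have "(\<lambda>y. bt h s y * ef k2 y / d) integrable_on {-r..r}"
      if "continuous_on UNIV (\<lambda>p. h (fst p) (snd p))" "d \<noteq> 0" for h d
      using that(2) by (intro integrable_continuous_real continuous_intros continuous_on_subset[OF contbt[OF that(1)]]) auto
    ultimately show ?thesis
      using cn by (simp add: integral_diff integrable_diff c0 c1 c2)
  qed
  have E12: "norm (integral {-r..r} (\<lambda>y. bt h s y * ef k2 y)) \<le> 2 * A * pi / s"
    if hc: "continuous_on UNIV (\<lambda>p. h (fst p) (snd p))"
      and hb: "\<And>x y. \<bar>h x y\<bar> \<le> A / (1 + x\<^sup>2 + y\<^sup>2)" and s: "s \<ge> 1" and r: "r \<ge> 0" for h r s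
  proof -
    have "norm (integral {-r..r} (\<lambda>y. bt h s y * ef k2 y)) \<le> 2 * A * pi / \<bar>s\<bar>"
    proof (rule lor_bound')
      show "(\<lambda>y. bt h s y * ef k2 y) integrable_on {-r..r}"
        by (intro integrable_continuous_real continuous_intros continuous_on_subset[OF contbt[OF hc]]) auto
      fix y
      have "norm (bt h s y * ef k2 y) \<le> \<bar>h s y\<bar> + \<bar>h (-s) y\<bar>"
        unfolding bt_def norm_mult ef_norm mult_1_right
        by (rule order_trans[OF norm_triangle_ineq4]) (simp add: norm_mult)
      also have "\<dots> \<le> A / (1 + s\<^sup>2 + y\<^sup>2) + A / (1 + (-s)\<^sup>2 + y\<^sup>2)"
        by (intro add_mono hb)
      finally show "norm (bt h s y * ef k2 y) \<le> 2 * A / (1 + s\<^sup>2 + y\<^sup>2)" by simp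
    qed (use s r A in auto)
    then show ?thesis using s by simp
  qed
  have P0: "norm (integral {-r..r} (\<lambda>y. of_real (h0 x y) * ef k2 y)) \<le> (A * pi / \<bar>x\<bar> + 2 * A / \<bar>x\<bar>) / \<bar>k2\<bar>"
    if x: "\<bar>x\<bar> \<ge> 1" and r: "r \<ge> 0" for x r
  proof -
    have cyx: "continuous_on UNIV (\<lambda>y. hy x y)" by (rule cont_slice2[OF cy])
    have eq: "integral {-r..r} (\<lambda>y. of_real (h0 x y) * ef k2 y) =
      (integral {-r..r} (\<lambda>y. of_real (hy x y) * ef k2 y) - (of_real (h0 x r) * ef k2 r - of_real (h0 x (-r)) * ef k2 (-r))) / (\<i> * of_real k2)"
      using r by (intro IBP1(2)[OF k2 _ dy cyx]) auto
    have n1: "norm (integral {-r..r} (\<lambda>y. of_real (hy x y) * ef k2 y)) \<le> A * pi / \<bar>x\<bar>"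
    proof (rule lor_bound'[OF _ r A x])
      show "(\<lambda>y. of_real (hy x y) * ef k2 y) integrable_on {-r..r}"
        by (intro integrable_continuous_real continuous_intros continuous_on_subset[OF cyx]) auto
      show "norm (of_real (hy x y) * ef k2 y) \<le> A / (1 + x\<^sup>2 + y\<^sup>2)" for y
        using byy[of x y] by (simp add: norm_mult)
    qed
    have n2: "norm (of_real (h0 x r) * ef k2 r - of_real (h0 x (-r)) * ef k2 (-r)) \<le> 2 * A / \<bar>x\<bar>"
    proof -
      have "norm (of_real (h0 x r) * ef k2 r - of_real (h0 x (-r)) * ef k2 (-r)) \<le> \<bar>h0 x r\<bar> + \<bar>h0 x (-r)\<bar>"
        by (rule order_trans[OF norm_triangle_ineq4]) (simp add: norm_mult)
      also have "\<dots> \<le> A / \<bar>x\<bar> + A / \<bar>x\<bar>" by (intro add_mono b0 x)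
      finally show ?thesis by simp
    qed
    have "norm (integral {-r..r} (\<lambda>y. of_real (h0 x y) * ef k2 y)) =
      norm (integral {-r..r} (\<lambda>y. of_real (hy x y) * ef k2 y) - (of_real (h0 x r) * ef k2 r - of_real (h0 x (-r)) * ef k2 (-r))) / \<bar>k2\<bar>"
      unfolding eq by (simp add: norm_divide norm_mult)
    also have "\<dots> \<le> (A * pi / \<bar>x\<bar> + 2 * A / \<bar>x\<bar>) / \<bar>k2\<bar>"
      using k2 by (intro divide_right_mono order_trans[OF norm_triangle_ineq4 add_mono[OF n1 n2]]) auto
    finally show ?thesis .
  qed
  have E0: "norm (integral {-r..r} (\<lambda>y. bt h0 s y * ef k2 y)) \<le> 2 * ((A * pi / s + 2 * A / s) / \<bar>k2\<bar>)"
    if s: "s \<ge> 1" and r: "r \<ge> 0" for r s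
  proof -
    have ci: "(\<lambda>y. of_real (h0 x y) * ef k2 y) integrable_on {-r..r}" for x
      by (intro integrable_continuous_real continuous_intros continuous_on_subset[OF cont_slice2[OF c0]]) auto
    have "integral {-r..r} (\<lambda>y. bt h0 s y * ef k2 y) =
      integral {-r..r} (\<lambda>y. ef k1 s * (of_real (h0 s y) * ef k2 y) - ef k1 (-s) * (of_real (h0 (-s) y) * ef k2 y))"
      unfolding bt_def by (simp add: algebra_simps)
    also have "\<dots> = ef k1 s * integral {-r..r} (\<lambda>y. of_real (h0 s y) * ef k2 y) - ef k1 (-s) * integral {-r..r} (\<lambda>y. of_real (h0 (-s) y) * ef k2 y)"
      by (simp add: integral_diff integrable_on_mult_right ci)
    finally have eq: "integral {-r..r} (\<lambda>y. bt h0 s y * ef k2 y) = \<dots>" .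
    have "norm (integral {-r..r} (\<lambda>y. bt h0 s y * ef k2 y)) \<le>
       norm (integral {-r..r} (\<lambda>y. of_real (h0 s y) * ef k2 y)) + norm (integral {-r..r} (\<lambda>y. of_real (h0 (-s) y) * ef k2 y))"
      unfolding eq by (rule order_trans[OF norm_triangle_ineq4]) (simp add: norm_mult)
    also have "\<dots> \<le> (A * pi / \<bar>s\<bar> + 2 * A / \<bar>s\<bar>) / \<bar>k2\<bar> + (A * pi / \<bar>-s\<bar> + 2 * A / \<bar>-s\<bar>) / \<bar>k2\<bar>"
      using s r by (intro add_mono P0) auto
    finally show ?thesis using s by simp
  qed
  have gint: "(\<lambda>x. of_real (h3 x y) * ef k1 x) integrable_on UNIV" for y
  proof (rule cont_bound_integrable[where B="A / (1 + y\<^sup>2)"])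
    show "continuous_on UNIV (\<lambda>x. complex_of_real (h3 x y) * ef k1 x)"
      by (intro continuous_intros cx3)
    show "norm (complex_of_real (h3 x y) * ef k1 x) \<le> A / (1 + y\<^sup>2) / (1 + x\<^sup>2)" for x
      using b3[of x y] by (simp add: norm_mult mult.commute)
  qed
  have unif: "norm (J y - J3 s y) \<le> A / (1 + y\<^sup>2) * T s" if s: "s \<ge> 0" for s y
    unfolding J_def J3_def T_def
  proof (rule tail[OF gint _ s])
    show "norm (complex_of_real (h3 x y) * ef k1 x) \<le> A / (1 + y\<^sup>2) / (1 + x\<^sup>2)" for x
      using b3[of x y] by (simp add: norm_mult mult.commute)
  qed
  have Jb: "norm (J y) \<le> A / (1 + y\<^sup>2) * pi" for y
    using unif[of 0 y] by (simp add: J3_def T_def)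
  have Aly: "A / (1 + y\<^sup>2) \<le> A" for y
  proof -
    have "A / (1 + y\<^sup>2) \<le> A / 1" using A by (intro divide_left_mono) auto
    then show ?thesis by simp
  qed
  have contJ: "continuous_on UNIV J"
  proof (rule uniform_limit_theorem[where F=at_top])
    show "\<forall>\<^sub>F s in at_top. continuous_on UNIV (J3 s)" by (simp add: contJ3)
    show "uniform_limit UNIV J3 J at_top"
    proof (rule uniform_limitI)
      fix e :: real assume e: "e > 0"
      have "((\<lambda>s. A * T s) \<longlongrightarrow> A * 0) at_top" unfolding T_def by (intro tendsto_intros tail_lim)
      then have "\<forall>\<^sub>F s in at_top. A * T s < e" using e by (auto dest: order_tendstoD)
      moreover have "\<forall>\<^sub>F s in at_top. s \<ge> (0::real)" by (rule eventually_ge_at_top)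
      ultimately show "\<forall>\<^sub>F s in at_top. \<forall>y\<in>UNIV. dist (J3 s y) (J y) < e"
      proof eventually_elim
        case (elim s)
        show ?case
        proof
          fix y
          have "dist (J3 s y) (J y) = norm (J y - J3 s y)" by (simp add: dist_norm norm_minus_commute)
          also have "\<dots> \<le> A / (1 + y\<^sup>2) * T s" by (rule unif) (use elim in auto)
          also have "\<dots> \<le> A * T s" using T0 Aly by (intro mult_right_mono) auto
          finally show "dist (J3 s y) (J y) < e" using elim by simp
        qed
      qed
    qed
  qed simp
  have G1: "(\<lambda>y. J y / c^3 * ef k2 y) integrable_on UNIV"
  proof (rule cont_bound_integrable[where B="A * pi / \<bar>k1\<bar>^3"])
    show "continuous_on UNIV (\<lambda>y. J y / c ^ 3 * ef k2 y)"
      using cn by (intro continuous_intros contJ) auto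
    show "norm (J y / c ^ 3 * ef k2 y) \<le> A * pi / \<bar>k1\<bar> ^ 3 / (1 + y\<^sup>2)" for y
    proof -
      have "norm (J y / c ^ 3 * ef k2 y) = norm (J y) / \<bar>k1\<bar>^3"
        by (simp add: norm_mult norm_divide norm_power cn)
      also have "\<dots> \<le> A / (1 + y\<^sup>2) * pi / \<bar>k1\<bar>^3"
        using Jb[of y] by (intro divide_right_mono) auto
      finally show ?thesis by (simp add: mult.commute)
    qed
  qed
  then show ?G1 unfolding J_def c_def .
  define L where "L = integral UNIV (\<lambda>y. J y / c^3 * ef k2 y)"
  define Ir where "Ir r = integral {-r..r} (\<lambda>y. J y / c^3 * ef k2 y)" for r
  have Mb: "norm (integral {-r..r} (\<lambda>y. J3 s y * ef k2 y) / c^3 - Ir r) \<le> A * T s / \<bar>k1\<bar>^3 * pi"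
    if r: "r \<ge> 0" and s: "s \<ge> 0" for r s
  proof -
    have i1: "(\<lambda>y. J3 s y * ef k2 y / c^3) integrable_on {-r..r}"
      using cn by (intro integrable_continuous_real continuous_intros continuous_on_subset[OF contJ3]) auto
    have i2: "(\<lambda>y. J y / c^3 * ef k2 y) integrable_on {-r..r}"
      using G1 integrable_on_subinterval by (metis subset_UNIV)
    have "integral {-r..r} (\<lambda>y. J3 s y * ef k2 y) / c^3 - Ir r =
        integral {-r..r} (\<lambda>y. J3 s y * ef k2 y / c^3 - J y / c^3 * ef k2 y)"
      unfolding Ir_def integral_diff[OF i1 i2] by simp
    also have "norm \<dots> \<le> A * T s / \<bar>k1\<bar>^3 * (arctan r - arctan (-r))"
    proof (rule int_bnd)
      show "(\<lambda>y. J3 s y * ef k2 y / c^3 - J y / c^3 * ef k2 y) integrable_on {-r..r}"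
        by (rule integrable_diff[OF i1 i2])
      fix y
      have "norm (J3 s y * ef k2 y / c^3 - J y / c^3 * ef k2 y) = norm (J y - J3 s y) / \<bar>k1\<bar>^3"
      proof -
        have "J3 s y * ef k2 y / c^3 - J y / c^3 * ef k2 y = - ((J y - J3 s y) * ef k2 y / c^3)"
          using cn by (simp add: field_simps)
        then show ?thesis by (simp only: norm_minus_cancel norm_mult norm_divide norm_power cn ef_norm mult_1_right)
      qed
      also have "\<dots> \<le> A / (1 + y\<^sup>2) * T s / \<bar>k1\<bar>^3"
        by (intro divide_right_mono unif s) auto
      finally show "norm (J3 s y * ef k2 y / c^3 - J y / c^3 * ef k2 y) \<le> A * T s / \<bar>k1\<bar>^3 / (1 + y\<^sup>2)"
        by (simp add: mult.commute)
    qed (use r in auto)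
    also have "\<dots> \<le> A * T s / \<bar>k1\<bar>^3 * pi"
      using arctan_bounded[of r] A T0[of s]
      by (intro mult_left_mono) (auto simp: arctan_minus)
    finally show ?thesis .
  qed
  define K where "K = 2 * A * pi / \<bar>k1\<bar>^3 + 2 * A * pi / \<bar>k1\<bar>^2 + 2 * ((A * pi + 2 * A) / \<bar>k2\<bar>) / \<bar>k1\<bar>"
  define v where "v s = A * T s / \<bar>k1\<bar>^3 * pi + K * inverse s" for s
  have mainb: "norm (integral {-r..r} (\<lambda>y. integral {-s..s} (\<lambda>x. of_real (h0 x y) * ef k1 x * ef k2 y)) - L)
      \<le> norm (Ir r - L) + v s" if r: "r \<ge> 0" and s: "s \<ge> 1" for r s
  proof -
    define E2 where "E2 = integral {-r..r} (\<lambda>y. bt h2 s y * ef k2 y)"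
    define E1 where "E1 = integral {-r..r} (\<lambda>y. bt h1 s y * ef k2 y)"
    define E0 where "E0 = integral {-r..r} (\<lambda>y. bt h0 s y * ef k2 y)"
    define M where "M = integral {-r..r} (\<lambda>y. J3 s y * ef k2 y)"
    have "integral {-r..r} (\<lambda>y. integral {-s..s} (\<lambda>x. of_real (h0 x y) * ef k1 x * ef k2 y)) - L =
        (M / c^3 - Ir r) + (Ir r - L) - (E2 / c^3 + E1 / c^2 + E0 / c)"
      using s by (subst S2) (auto simp: M_def E2_def E1_def E0_def algebra_simps)
    also have "norm \<dots> \<le> norm (M / c^3 - Ir r) + norm (Ir r - L) + (norm E2 / \<bar>k1\<bar>^3 + norm E1 / \<bar>k1\<bar>^2 + norm E0 / \<bar>k1\<bar>)"
    proof -
      have "norm (E2 / c^3 + E1 / c^2 + E0 / c) \<le> norm E2 / \<bar>k1\<bar>^3 + norm E1 / \<bar>k1\<bar>^2 + norm E0 / \<bar>k1\<bar>"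
        by (rule order_trans[OF norm_triangle_ineq add_mono[OF order_trans[OF norm_triangle_ineq]]])
           (simp_all add: norm_divide norm_power cn)
      moreover have "norm ((M / c^3 - Ir r) + (Ir r - L) - (E2 / c^3 + E1 / c^2 + E0 / c)) \<le>
          norm ((M / c^3 - Ir r) + (Ir r - L)) + norm (E2 / c^3 + E1 / c^2 + E0 / c)"
        by (rule norm_triangle_ineq4)
      moreover have "norm ((M / c^3 - Ir r) + (Ir r - L)) \<le> norm (M / c^3 - Ir r) + norm (Ir r - L)"
        by (rule norm_triangle_ineq)
      ultimately show ?thesis by linarith
    qed
    also have "\<dots> \<le> A * T s / \<bar>k1\<bar>^3 * pi + norm (Ir r - L) +
        ((2 * A * pi / s) / \<bar>k1\<bar>^3 + (2 * A * pi / s) / \<bar>k1\<bar>^2 + (2 * ((A * pi / s + 2 * A / s) / \<bar>k2\<bar>)) / \<bar>k1\<bar>)"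
      unfolding M_def E2_def E1_def E0_def
      using r s k1
      by (intro add_mono Mb divide_right_mono E12 E0 c2 c1 b1 b2 order_refl) auto
    also have "\<dots> = norm (Ir r - L) + v s"
      unfolding v_def K_def using s k1 k2 by (simp add: field_simps)
    finally show ?thesis .
  qed
  have vlim: "(v \<longlongrightarrow> 0) at_top"
  proof -
    have "(v \<longlongrightarrow> A * 0 / \<bar>k1\<bar>^3 * pi + K * 0) at_top"
      unfolding v_def T_def using k1 by (intro tendsto_intros tail_lim tendsto_inverse_0_at_top filterlim_ident) auto
    then show ?thesis by simp
  qed
  have ulim: "((\<lambda>r. norm (Ir r - L)) \<longlongrightarrow> 0) at_top"
  proof -
    have "(Ir \<longlongrightarrow> L) at_top" unfolding Ir_def L_def by (rule symlim[OF G1])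
    then have "((\<lambda>r. Ir r - L) \<longlongrightarrow> 0) at_top" by (rule LIM_zero)
    then show ?thesis by (rule tendsto_norm_zero)
  qed
  have "((\<lambda>p. norm (Ir (fst p) - L) + v (snd p)) \<longlongrightarrow> 0 + 0) (at_top \<times>\<^sub>F at_top)"
    by (intro tendsto_add filterlim_compose[OF ulim filterlim_fst] filterlim_compose[OF vlim filterlim_snd])
  then have tl: "((\<lambda>p. norm (Ir (fst p) - L) + v (snd p)) \<longlongrightarrow> 0) (at_top \<times>\<^sub>F at_top)" by simp
  have ev: "\<forall>\<^sub>F p in at_top \<times>\<^sub>F at_top.
      norm ((\<lambda>(r, s). integral {-r..r} (\<lambda>y. integral {-s..s} (\<lambda>x. of_real (h0 x y) * ef k1 x * ef k2 y))) p - L)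
      \<le> norm (Ir (fst p) - L) + v (snd p)"
  proof -
    have hint: "\<forall>r s. r \<ge> 0 \<longrightarrow> s \<ge> 1 \<longrightarrow>
      norm ((\<lambda>(r, s). integral {-r..r} (\<lambda>y. integral {-s..s} (\<lambda>x. of_real (h0 x y) * ef k1 x * ef k2 y))) (r, s) - L)
      \<le> norm (Ir (fst (r, s)) - L) + v (snd (r, s))"
      using mainb by (simp only: prod.case fst_conv snd_conv) blast
    show ?thesis
      apply (subst eventually_prod_filter)
      apply (rule exI[of _ "\<lambda>r. r \<ge> 0"], rule exI[of _ "\<lambda>s. s \<ge> 1"])
      apply (intro conjI eventually_ge_at_top)
      apply (rule hint)
      done
  qed
  have "((\<lambda>p. (\<lambda>(r, s). integral {-r..r} (\<lambda>y. integral {-s..s} (\<lambda>x. of_real (h0 x y) * ef k1 x * ef k2 y))) p - L)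
      \<longlongrightarrow> 0) (at_top \<times>\<^sub>F at_top)"
    by (rule Lim_null_comparison[OF ev tl])
  then have "((\<lambda>(r, s). integral {-r..r} (\<lambda>y. integral {-s..s} (\<lambda>x. of_real (h0 x y) * ef k1 x * ef k2 y)))
      \<longlongrightarrow> L) (at_top \<times>\<^sub>F at_top)"
    by (rule LIM_zero_cancel)
  then show ?G2 unfolding L_def J_def c_def .
qed

lemma norm3_sq: "(norm (x::real, y::real, z::real))\<^sup>2 = x\<^sup>2 + y\<^sup>2 + z\<^sup>2"
  by (simp add: norm_Pair add.assoc)

lemma norm2_sq: "(norm (x::real, y::real))\<^sup>2 = x\<^sup>2 + y\<^sup>2"
  by (simp add: norm_Pair)

lemma n3_cont: "normal3 f \<Longrightarrow> continuous_on UNIV (pdw w f)"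
  unfolding normal3_def smooth3_def by blast

lemma n3_derivX: "normal3 f \<Longrightarrow> ((\<lambda>t. pdw w f (t, y, z)) has_real_derivative pdw (VX # w) f (x, y, z)) (at x)"
  unfolding normal3_def smooth3_def
  by (auto simp: DERIV_deriv_iff_real_differentiable)

lemma n3_derivY: "normal3 f \<Longrightarrow> ((\<lambda>t. pdw w f (x, t, z)) has_real_derivative pdw (VY # w) f (x, y, z)) (at y)"
  unfolding normal3_def smooth3_def
  by (auto simp: DERIV_deriv_iff_real_differentiable)

lemma n3_derivZ: "normal3 f \<Longrightarrow> ((\<lambda>t. pdw w f (x, y, t)) has_real_derivative pdw (VZ # w) f (x, y, z)) (at z)"
  unfolding normal3_def smooth3_def
  by (auto simp: DERIV_deriv_iff_real_differentiable)

lemma n3_bound: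
  assumes "normal3 f"
  shows "\<exists>C. \<forall>p. norm p > 1 \<longrightarrow> \<bar>pdw (replicate n d) f p\<bar> \<le> C / norm p ^ (n + 1)"
proof (cases "n = 0")
  case True
  then show ?thesis using assms unfolding normal3_def by simp
next
  case False
  then have n1: "n \<ge> 1" by simp
  from assms have H: "\<forall>i j k. i + j + k \<ge> 1 \<longrightarrow>
        (\<exists>C. \<forall>p. norm p > 1 \<longrightarrow> \<bar>partial3 i j k f p\<bar> \<le> C / norm p ^ (i + j + k + 1))"
    unfolding normal3_def by blast
  show ?thesis
  proof (cases d)
    case VX then show ?thesis using H[rule_format, of n 0 0] n1 by (simp add: partial3_def)
  next
    case VY then show ?thesis using H[rule_format, of 0 n 0] n1 by (simp add: partial3_def)
  next
    case VZ then show ?thesis using H[rule_format, of 0 0 n] n1 by (simp add: partial3_def)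
  qed
qed

lemma GB:
  fixes g :: "real \<times> real \<times> real \<Rightarrow> real"
  assumes c: "continuous_on UNIV g" and b: "\<And>p. norm p > 1 \<Longrightarrow> \<bar>g p\<bar> \<le> C / norm p ^ m"
  shows "\<exists>B\<ge>0. \<forall>p. \<bar>g p\<bar> \<le> B / (1 + norm p) ^ m"
proof -
  have "compact (g ` cball 0 1)"
    by (intro compact_continuous_image continuous_on_subset[OF c]) auto
  then have "bounded (g ` cball 0 1)" by (rule compact_imp_bounded)
  then obtain M where M0: "\<forall>x\<in>g ` cball 0 1. norm x \<le> M" unfolding bounded_iff by blast
  have M: "\<bar>g p\<bar> \<le> M" if "p \<in> cball 0 1" for p
    using M0 that by (metis image_eqI real_norm_def)
  define B where "B = 2 ^ m * max M (max C 0)"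
  have "\<bar>g p\<bar> \<le> B / (1 + norm p) ^ m" for p
  proof (cases "norm p \<le> 1")
    case True
    then have "\<bar>g p\<bar> \<le> M" using M by auto
    moreover have "(1 + norm p) ^ m \<le> 2 ^ m" using True by (intro power_mono) auto
    moreover have "M \<ge> 0" using M[of 0] by auto
    ultimately have "\<bar>g p\<bar> * (1 + norm p) ^ m \<le> max M (max C 0) * 2 ^ m"
      by (intro mult_mono) auto
    moreover have "(1 + norm p) ^ m > 0" by (simp add: add_pos_nonneg)
    ultimately show ?thesis unfolding B_def by (subst pos_le_divide_eq) (auto simp: mult.commute)
  next
    case False
    then have gp: "\<bar>g p\<bar> \<le> max C 0 / norm p ^ m"
      using b[of p] by (smt (verit) divide_right_mono zero_le_power norm_ge_zero)
    have "(1 + norm p) ^ m \<le> (2 * norm p) ^ m" using False by (intro power_mono) auto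
    then have "\<bar>g p\<bar> * (1 + norm p) ^ m \<le> max C 0 / norm p ^ m * (2 * norm p) ^ m"
      using gp by (intro mult_mono) auto
    also have "\<dots> = max C 0 * 2 ^ m"
    proof -
      have "norm p ^ m \<noteq> 0" using False by auto
      then show ?thesis by (auto simp: power_mult_distrib)
    qed
    also have "\<dots> \<le> max M (max C 0) * 2 ^ m" by (intro mult_right_mono) auto
    finally have "\<bar>g p\<bar> * (1 + norm p) ^ m \<le> max M (max C 0) * 2 ^ m" .
    moreover have "(1 + norm p) ^ m > 0" by (simp add: add_pos_nonneg)
    ultimately show ?thesis unfolding B_def by (subst pos_le_divide_eq) (auto simp: mult.commute)
  qed
  moreover have "B \<ge> 0" unfolding B_def by auto
  ultimately show ?thesis by blast
qed

lemma n3_global: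
  assumes "normal3 f"
  shows "\<exists>B\<ge>0. \<forall>p. \<bar>pdw (replicate n d) f p\<bar> \<le> B / (1 + norm p) ^ (n + 1)"
proof -
  obtain C where "\<forall>p. norm p > 1 \<longrightarrow> \<bar>pdw (replicate n d) f p\<bar> \<le> C / norm p ^ (n + 1)"
    using n3_bound[OF assms] by blast
  then show ?thesis by (intro GB n3_cont[OF assms]) auto
qed

lemma pow_ge1: "0 \<le> (n::real) \<Longrightarrow> 1 \<le> k \<Longrightarrow> 1 + n \<le> (1 + n) ^ k"
  by (metis le_add_same_cancel1 power_increasing power_one_right)

lemma pow_ge2: "0 \<le> (n::real) \<Longrightarrow> 2 \<le> k \<Longrightarrow> 1 + n\<^sup>2 \<le> (1 + n) ^ k"
proof -
  assume n: "0 \<le> n" and k: "2 \<le> k"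
  have "1 + n\<^sup>2 \<le> (1 + n) ^ 2" using n by (simp add: power2_eq_square algebra_simps)
  also have "\<dots> \<le> (1 + n) ^ k" using n k by (intro power_increasing) auto
  finally show ?thesis .
qed

lemma div_mono_B: "0 \<le> (B::real) \<Longrightarrow> 0 < a \<Longrightarrow> a \<le> b \<Longrightarrow> B / b \<le> B / a"
  by (intro divide_left_mono) auto

lemma zero_lim:
  fixes h :: "real \<Rightarrow> real"
  assumes "\<And>t. \<bar>h t\<bar> \<le> B / (1 + \<bar>t\<bar>)"
  shows "(h \<longlongrightarrow> 0) at_top" "(h \<longlongrightarrow> 0) at_bot"
proof -
  have "((\<lambda>t. B / (1 + \<bar>t\<bar>)) \<longlongrightarrow> 0) at_top" by real_asymp
  then show "(h \<longlongrightarrow> 0) at_top"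
    by (rule Lim_null_comparison[rotated]) (use assms in auto)
  have "((\<lambda>t. B / (1 + \<bar>t\<bar>)) \<longlongrightarrow> 0) at_bot" by real_asymp
  then show "(h \<longlongrightarrow> 0) at_bot"
    by (rule Lim_null_comparison[rotated]) (use assms in auto)
qed

lemma L1w:
  fixes g0 g1 g2 g3 :: "real \<times> real \<times> real \<Rightarrow> real" and P :: "real \<Rightarrow> real \<times> real \<times> real"
  assumes k: "k \<noteq> 0"
    and d1: "\<And>t. ((\<lambda>s. g0 (P s)) has_real_derivative g1 (P t)) (at t)"
    and d2: "\<And>t. ((\<lambda>s. g1 (P s)) has_real_derivative g2 (P t)) (at t)"
    and d3: "\<And>t. ((\<lambda>s. g2 (P s)) has_real_derivative g3 (P t)) (at t)"
    and cP: "continuous_on UNIV P" and c3: "continuous_on UNIV g3"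
    and nP: "\<And>t. \<bar>t\<bar> \<le> norm (P t)"
    and B: "B \<ge> 0"
    and b0: "\<And>p. \<bar>g0 p\<bar> \<le> B / (1 + norm p) ^ 1"
    and b1: "\<And>p. \<bar>g1 p\<bar> \<le> B / (1 + norm p) ^ 2"
    and b2: "\<And>p. \<bar>g2 p\<bar> \<le> B / (1 + norm p) ^ 3"
    and b3: "\<And>p. \<bar>g3 p\<bar> \<le> B / (1 + norm p) ^ 4"
  shows "(\<lambda>t. of_real (g3 (P t)) * ef k t) integrable_on UNIV"
    and "((\<lambda>r. integral {-r..r} (\<lambda>t. of_real (g0 (P t)) * ef k t)) \<longlongrightarrow>
          integral UNIV (\<lambda>t. of_real (g3 (P t)) * ef k t) / (\<i> * of_real k) ^ 3) at_top"
proof -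
  have lin: "B / (1 + norm p) ^ m \<le> B / (1 + \<bar>t\<bar>)" if "m \<ge> 1" "\<bar>t\<bar> \<le> norm p" for m t p
    using that pow_ge1[of "norm p" m] by (intro div_mono_B B) auto
  have z: "((\<lambda>t. g (P t)) \<longlongrightarrow> 0) at_top \<and> ((\<lambda>t. g (P t)) \<longlongrightarrow> 0) at_bot"
    if "\<And>p. \<bar>g p\<bar> \<le> B / (1 + norm p) ^ m" "m \<ge> 1" for g m
  proof -
    have "\<bar>g (P t)\<bar> \<le> B / (1 + \<bar>t\<bar>)" for t
      using that(1)[of "P t"] lin[OF that(2) nP[of t]] by linarith
    from zero_lim[OF this] show ?thesis by blast
  qed
  have z0: "((\<lambda>t. g0 (P t)) \<longlongrightarrow> 0) at_top \<and> ((\<lambda>t. g0 (P t)) \<longlongrightarrow> 0) at_bot" by (rule z[OF b0]) auto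
  have z1: "((\<lambda>t. g1 (P t)) \<longlongrightarrow> 0) at_top \<and> ((\<lambda>t. g1 (P t)) \<longlongrightarrow> 0) at_bot" by (rule z[OF b1]) auto
  have z2: "((\<lambda>t. g2 (P t)) \<longlongrightarrow> 0) at_top \<and> ((\<lambda>t. g2 (P t)) \<longlongrightarrow> 0) at_bot" by (rule z[OF b2]) auto
  have b3': "\<bar>g3 (P t)\<bar> \<le> B / (1 + t\<^sup>2)" for t
  proof -
    have "1 + t\<^sup>2 \<le> 1 + (norm (P t))\<^sup>2"
      using power_mono[OF nP[of t], of 2] by simp
    also have "\<dots> \<le> (1 + norm (P t)) ^ 4" by (rule pow_ge2) auto
    finally have "B / (1 + norm (P t)) ^ 4 \<le> B / (1 + t\<^sup>2)" by (intro div_mono_B B) auto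
    then show ?thesis using b3[of "P t"] by linarith
  qed
  have c3': "continuous_on UNIV (\<lambda>t. g3 (P t))"
    by (rule continuous_on_compose2[OF c3 cP]) auto
  show "(\<lambda>t. of_real (g3 (P t)) * ef k t) integrable_on UNIV"
    and "((\<lambda>r. integral {-r..r} (\<lambda>t. of_real (g0 (P t)) * ef k t)) \<longlongrightarrow>
          integral UNIV (\<lambda>t. of_real (g3 (P t)) * ef k t) / (\<i> * of_real k) ^ 3) at_top"
    using L1[of k "\<lambda>t. g0 (P t)" "\<lambda>t. g1 (P t)" "\<lambda>t. g2 (P t)" "\<lambda>t. g3 (P t)" B, OF k d1 d2 d3 c3'] z0 z1 z2 b3'
    by auto
qed

lemma L2w:
  fixes g0 g1 g2 g3 gy :: "real \<times> real \<times> real \<Rightarrow> real" and P :: "real \<Rightarrow> real \<Rightarrow> real \<times> real \<times> real"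
  assumes k1: "k1 \<noteq> 0" and k2: "k2 \<noteq> 0"
    and dx1: "\<And>x y. ((\<lambda>t. g0 (P t y)) has_real_derivative g1 (P x y)) (at x)"
    and dx2: "\<And>x y. ((\<lambda>t. g1 (P t y)) has_real_derivative g2 (P x y)) (at x)"
    and dx3: "\<And>x y. ((\<lambda>t. g2 (P t y)) has_real_derivative g3 (P x y)) (at x)"
    and dy: "\<And>x y. ((\<lambda>t. g0 (P x t)) has_real_derivative gy (P x y)) (at y)"
    and cP: "continuous_on UNIV (\<lambda>q. P (fst q) (snd q))"
    and c0: "continuous_on UNIV g0" and c1: "continuous_on UNIV g1" and c2: "continuous_on UNIV g2"
    and c3: "continuous_on UNIV g3" and cy: "continuous_on UNIV gy"
    and nP: "\<And>x y. x\<^sup>2 + y\<^sup>2 \<le> (norm (P x y))\<^sup>2"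
    and B: "B \<ge> 0"
    and b0: "\<And>p. \<bar>g0 p\<bar> \<le> B / (1 + norm p) ^ 1"
    and b1: "\<And>p. \<bar>g1 p\<bar> \<le> B / (1 + norm p) ^ 2"
    and b2: "\<And>p. \<bar>g2 p\<bar> \<le> B / (1 + norm p) ^ 3"
    and b3: "\<And>p. \<bar>g3 p\<bar> \<le> B / (1 + norm p) ^ 4"
    and byy: "\<And>p. \<bar>gy p\<bar> \<le> B / (1 + norm p) ^ 2"
  shows "(\<lambda>y. integral UNIV (\<lambda>x. of_real (g3 (P x y)) * ef k1 x) / (\<i> * of_real k1) ^ 3 * ef k2 y) integrable_on UNIV"
    and "((\<lambda>(r, s). integral {-r..r} (\<lambda>y. integral {-s..s} (\<lambda>x. of_real (g0 (P x y)) * ef k1 x * ef k2 y)))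
          \<longlongrightarrow> integral UNIV (\<lambda>y. integral UNIV (\<lambda>x. of_real (g3 (P x y)) * ef k1 x) / (\<i> * of_real k1) ^ 3 * ef k2 y))
          (at_top \<times>\<^sub>F at_top)"
proof -
  have cc: "continuous_on UNIV (\<lambda>q. g (P (fst q) (snd q)))" if "continuous_on UNIV g" for g
    by (rule continuous_on_compose2[OF that cP]) auto
  have xle: "\<bar>x\<bar> \<le> norm (P x y)" for x y
  proof -
    have "x\<^sup>2 \<le> (norm (P x y))\<^sup>2" using nP[of x y] by (smt (verit) zero_le_power2)
    then show ?thesis using abs_le_square_iff by (metis abs_norm_cancel)
  qed
  have nb0: "\<bar>g0 (P x y)\<bar> \<le> B / \<bar>x\<bar>" if "\<bar>x\<bar> \<ge> 1" for x y
  proof -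
    have "B / (1 + norm (P x y)) ^ 1 \<le> B / \<bar>x\<bar>" using that xle[of x y] by (intro div_mono_B B) auto
    then show ?thesis using b0[of "P x y"] by linarith
  qed
  have nb2: "\<bar>g (P x y)\<bar> \<le> B / (1 + x\<^sup>2 + y\<^sup>2)"
    if "\<And>p. \<bar>g p\<bar> \<le> B / (1 + norm p) ^ m" "m \<ge> 2" for g m x y
  proof -
    have "1 + x\<^sup>2 + y\<^sup>2 \<le> 1 + (norm (P x y))\<^sup>2" using nP[of x y] by simp
    also have "\<dots> \<le> (1 + norm (P x y)) ^ m" by (rule pow_ge2) (use that in auto)
    finally have "B / (1 + norm (P x y)) ^ m \<le> B / (1 + x\<^sup>2 + y\<^sup>2)"
      by (intro div_mono_B B) (auto simp: add_pos_nonneg)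
    then show ?thesis using that(1)[of "P x y"] by linarith
  qed
  have nb3: "\<bar>g3 (P x y)\<bar> \<le> B / ((1 + x\<^sup>2) * (1 + y\<^sup>2))" for x y
  proof -
    have "(1 + x\<^sup>2) * (1 + y\<^sup>2) \<le> (1 + x\<^sup>2 + y\<^sup>2)\<^sup>2"
    proof -
      have a: "0 \<le> x\<^sup>2" "0 \<le> y\<^sup>2" "0 \<le> x\<^sup>2*y\<^sup>2" "0 \<le> x\<^sup>2*x\<^sup>2" "0 \<le> y\<^sup>2*y\<^sup>2" by auto
      have "(1 + x\<^sup>2 + y\<^sup>2)\<^sup>2 = (1 + x\<^sup>2) * (1 + y\<^sup>2) + (x\<^sup>2 + y\<^sup>2 + x\<^sup>2*x\<^sup>2 + x\<^sup>2*y\<^sup>2 + y\<^sup>2*y\<^sup>2)"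
        by (simp add: power2_eq_square algebra_simps)
      then show ?thesis using a by linarith
    qed
    also have "\<dots> \<le> (1 + (norm (P x y))\<^sup>2)\<^sup>2"
      using nP[of x y] by (intro power_mono) (auto simp: add_nonneg_nonneg)
    also have "\<dots> \<le> ((1 + norm (P x y)) ^ 2)\<^sup>2"
      by (intro power_mono pow_ge2) auto
    also have "\<dots> = (1 + norm (P x y)) ^ 4" by (simp flip: power_mult)
    finally have "B / (1 + norm (P x y)) ^ 4 \<le> B / ((1 + x\<^sup>2) * (1 + y\<^sup>2))"
      by (intro div_mono_B B) auto
    then show ?thesis using b3[of "P x y"] by linarith
  qed
  show "(\<lambda>y. integral UNIV (\<lambda>x. of_real (g3 (P x y)) * ef k1 x) / (\<i> * of_real k1) ^ 3 * ef k2 y) integrable_on UNIV"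
    and "((\<lambda>(r, s). integral {-r..r} (\<lambda>y. integral {-s..s} (\<lambda>x. of_real (g0 (P x y)) * ef k1 x * ef k2 y)))
          \<longlongrightarrow> integral UNIV (\<lambda>y. integral UNIV (\<lambda>x. of_real (g3 (P x y)) * ef k1 x) / (\<i> * of_real k1) ^ 3 * ef k2 y))
          (at_top \<times>\<^sub>F at_top)"
    by (rule L2[of k1 k2 "\<lambda>x y. g0 (P x y)" "\<lambda>x y. g1 (P x y)" "\<lambda>x y. g2 (P x y)" "\<lambda>x y. g3 (P x y)"
          "\<lambda>x y. gy (P x y)" B, OF k1 k2 dx1 dx2 dx3 dy cc[OF c0] cc[OF c1] cc[OF c2] cc[OF c3] cc[OF cy] B
          nb0 nb2[OF b1] nb2[OF b2] nb2[OF byy] nb3]; simp)+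
qed

lemma rho_bound_fin:
  fixes g :: "real \<Rightarrow> complex"
  assumes gi: "g integrable_on {-r..r}" and r: "r \<ge> 0" and A: "A \<ge> 0" and \<rho>: "\<rho> > 0"
    and gb: "\<And>t. norm (g t) \<le> A / (t\<^sup>2 + \<rho>\<^sup>2)"
  shows "norm (integral {-r..r} g) \<le> A * pi / \<rho>"
proof -
  have hi: "((\<lambda>y. A * (1 / (y\<^sup>2 + \<rho>\<^sup>2))) has_integral A * ((arctan (r / \<rho>) - arctan (-r / \<rho>)) / \<rho>)) {-r..r}"
    using r \<rho> by (intro has_integral_mult_right arctan_int) auto
  have "norm (integral {-r..r} g) \<le> integral {-r..r} (\<lambda>y. A * (1 / (y\<^sup>2 + \<rho>\<^sup>2)))"
  proof (rule integral_norm_bound_integral[OF gi])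
    show "(\<lambda>y. A * (1 / (y\<^sup>2 + \<rho>\<^sup>2))) integrable_on {-r..r}" using hi by blast
    fix y show "norm (g y) \<le> A * (1 / (y\<^sup>2 + \<rho>\<^sup>2))"
      using gb[of y] by simp
  qed
  also have "\<dots> = A * ((arctan (r / \<rho>) - arctan (-r / \<rho>)) / \<rho>)" using hi by (rule integral_unique)
  also have "\<dots> = A * (2 * arctan (r / \<rho>)) / \<rho>" by (simp add: arctan_minus)
  also have "\<dots> \<le> A * pi / \<rho>"
    using \<rho> A arctan_bounded[of "r/\<rho>"] by (intro divide_right_mono mult_left_mono) auto
  finally show ?thesis .
qed

lemma rho_bound:
  fixes g :: "real \<Rightarrow> complex"
  assumes gi: "g integrable_on UNIV" and A: "A \<ge> 0" and \<rho>: "\<rho> > 0"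
    and gb: "\<And>t. norm (g t) \<le> A / (t\<^sup>2 + \<rho>\<^sup>2)"
  shows "norm (integral UNIV g) \<le> A * pi / \<rho>"
proof -
  have "((\<lambda>r. norm (integral {-r..r} g)) \<longlongrightarrow> norm (integral UNIV g)) at_top"
    by (intro tendsto_norm symlim gi)
  moreover have "\<forall>\<^sub>F r in at_top. norm (integral {-r..r} g) \<le> A * pi / \<rho>"
    using eventually_ge_at_top[of 0]
  proof eventually_elim
    case (elim r)
    show ?case
      by (rule rho_bound_fin[OF _ elim A \<rho> gb]) (metis gi integrable_on_subinterval subset_UNIV)
  qed
  ultimately show ?thesis by (rule tendsto_upperbound) simp
qed

lemma decay:
  fixes g3 :: "real \<times> real \<times> real \<Rightarrow> real" and P :: "real \<Rightarrow> real \<times> real \<times> real"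
  assumes gi: "(\<lambda>t. of_real (g3 (P t)) * ef k t) integrable_on UNIV" and k: "k \<noteq> 0"
    and C: "\<And>p. norm p > 1 \<Longrightarrow> \<bar>g3 p\<bar> \<le> C / norm p ^ 4"
    and nP: "\<And>t. (norm (P t))\<^sup>2 = t\<^sup>2 + \<rho>\<^sup>2" and \<rho>: "\<rho> > 1"
  shows "cmod (integral UNIV (\<lambda>t. of_real (g3 (P t)) * ef k t) / (\<i> * of_real k) ^ 3)
     \<le> (max C 0 * pi / \<bar>k\<bar> ^ 3) / \<rho> ^ 3"
proof -
  define C' where "C' = max C 0"
  have C': "C' \<ge> 0" unfolding C'_def by simp
  have bnd: "norm (of_real (g3 (P t)) * ef k t) \<le> (C' / \<rho>\<^sup>2) / (t\<^sup>2 + \<rho>\<^sup>2)" for t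
  proof -
    have np: "(norm (P t))\<^sup>2 \<ge> \<rho>\<^sup>2" using nP[of t] by simp
    have "norm (P t) \<ge> \<rho>" using np by (rule power2_le_imp_le) simp
    then have gt: "norm (P t) > 1" using \<rho> by simp
    have "\<bar>g3 (P t)\<bar> \<le> C' / norm (P t) ^ 4"
      using C[OF gt] gt unfolding C'_def by (smt (verit) divide_right_mono zero_le_power norm_ge_zero)
    also have "\<dots> = C' / ((t\<^sup>2 + \<rho>\<^sup>2) * (t\<^sup>2 + \<rho>\<^sup>2))"
    proof -
      have "norm (P t) ^ 4 = ((norm (P t))\<^sup>2)\<^sup>2" by (simp flip: power_mult)
      then show ?thesis by (simp only: nP power2_eq_square[of "t\<^sup>2 + \<rho>\<^sup>2"])
    qed
    also have "\<dots> \<le> C' / (\<rho>\<^sup>2 * (t\<^sup>2 + \<rho>\<^sup>2))"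
      using \<rho> C' by (intro divide_left_mono mult_right_mono mult_pos_pos) (auto simp: add_nonneg_pos)
    finally show ?thesis by (simp add: norm_mult)
  qed
  have "norm (integral UNIV (\<lambda>t. of_real (g3 (P t)) * ef k t)) \<le> (C' / \<rho>\<^sup>2) * pi / \<rho>"
    by (rule rho_bound[OF gi _ _ bnd]) (use C' \<rho> in auto)
  then have "cmod (integral UNIV (\<lambda>t. of_real (g3 (P t)) * ef k t)) / \<bar>k\<bar> ^ 3 \<le> (C' / \<rho>\<^sup>2) * pi / \<rho> / \<bar>k\<bar> ^ 3"
    by (rule divide_right_mono) simp
  also have "\<dots> = (C' * pi / \<bar>k\<bar> ^ 3) / \<rho> ^ 3" by (simp add: power2_eq_square power3_eq_cube)
  finally have fin: "cmod (integral UNIV (\<lambda>t. of_real (g3 (P t)) * ef k t)) / \<bar>k\<bar> ^ 3 \<le> (C' * pi / \<bar>k\<bar> ^ 3) / \<rho> ^ 3" .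
  have "cmod (integral UNIV (\<lambda>t. of_real (g3 (P t)) * ef k t) / (\<i> * of_real k) ^ 3) =
    cmod (integral UNIV (\<lambda>t. of_real (g3 (P t)) * ef k t)) / \<bar>k\<bar> ^ 3"
    by (simp add: norm_divide norm_power norm_mult)
  with fin show ?thesis unfolding C'_def by simp
qed

lemma swap_lim:
  fixes F :: "real \<Rightarrow> real \<Rightarrow> complex"
  assumes c: "continuous_on UNIV (\<lambda>q. F (fst q) (snd q))"
    and L: "((\<lambda>(r, s). integral {-r..r} (\<lambda>x. integral {-s..s} (\<lambda>y. F x y))) \<longlongrightarrow> L) (at_top \<times>\<^sub>F at_top)"
  shows "((\<lambda>(r, s). integral {-r..r} (\<lambda>y. integral {-s..s} (\<lambda>x. F x y))) \<longlongrightarrow> L) (at_top \<times>\<^sub>F at_top)"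
proof -
  have fe: "(\<lambda>(x, y). F x y) = (\<lambda>q. F (fst q) (snd q))" by (auto simp: fun_eq_iff)
  have eq: "integral {-s..s} (\<lambda>x. integral {-r..r} (\<lambda>y. F x y)) = integral {-r..r} (\<lambda>y. integral {-s..s} (\<lambda>x. F x y))" for r s
  proof -
    have cc: "continuous_on (cbox (-s, -r) (s, r)) (\<lambda>(x, y). F x y)"
      unfolding fe by (rule continuous_on_subset[OF c subset_UNIV])
    from integral_swap_continuous[OF cc] show ?thesis by (simp only: box_real)
  qed
  have "((\<lambda>p. (\<lambda>(r, s). integral {-r..r} (\<lambda>x. integral {-s..s} (\<lambda>y. F x y))) (prod.swap p)) \<longlongrightarrow> L) (at_top \<times>\<^sub>F at_top)"
  proof -
    have "filterlim (\<lambda>(r, s). integral {-r..r} (\<lambda>x. integral {-s..s} (\<lambda>y. F x y))) (nhds L)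
        (filtermap prod.swap (at_top \<times>\<^sub>F at_top))"
      using L by (simp only: prod_filter_commute[of at_top at_top, symmetric])
    then show ?thesis by (simp only: filterlim_filtermap)
  qed
  moreover have "(\<lambda>p. (\<lambda>(r, s). integral {-r..r} (\<lambda>x. integral {-s..s} (\<lambda>y. F x y))) (prod.swap p)) =
     (\<lambda>(r, s). integral {-r..r} (\<lambda>y. integral {-s..s} (\<lambda>x. F x y)))"
  proof (rule ext)
    fix p :: "real \<times> real"
    obtain r s where p: "p = (r, s)" by (cases p)
    show "(\<lambda>(r, s). integral {-r..r} (\<lambda>x. integral {-s..s} (\<lambda>y. F x y))) (prod.swap p) =
      (\<lambda>(r, s). integral {-r..r} (\<lambda>y. integral {-s..s} (\<lambda>x. F x y))) p"
      unfolding p prod.swap_def fst_conv snd_conv prod.case by (rule eq)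
  qed
  ultimately show ?thesis by simp
qed

lemma dX: "normal3 f \<Longrightarrow> ((\<lambda>t. pdw (replicate n VX) f (t, y, z)) has_real_derivative pdw (replicate (Suc n) VX) f (x, y, z)) (at x)"
  using n3_derivX[of f "replicate n VX"] by simp
lemma dY: "normal3 f \<Longrightarrow> ((\<lambda>t. pdw (replicate n VY) f (x, t, z)) has_real_derivative pdw (replicate (Suc n) VY) f (x, y, z)) (at y)"
  using n3_derivY[of f "replicate n VY"] by simp
lemma dZ: "normal3 f \<Longrightarrow> ((\<lambda>t. pdw (replicate n VZ) f (x, y, t)) has_real_derivative pdw (replicate (Suc n) VZ) f (x, y, z)) (at z)"
  using n3_derivZ[of f "replicate n VZ"] by simp

lemma n3_unif:
  assumes nf: "normal3 f"
  shows "\<exists>B\<ge>0. \<forall>d n p. n \<le> 3 \<longrightarrow> \<bar>pdw (replicate n d) f p\<bar> \<le> B / (1 + norm p) ^ (n + 1)"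
proof -
  define Q where "Q d n B \<longleftrightarrow> B \<ge> 0 \<and> (\<forall>p. \<bar>pdw (replicate n d) f p\<bar> \<le> B / (1 + norm p) ^ (n + 1))" for d n B
  define Bf where "Bf d n = (SOME B. Q d n B)" for d n
  have QB: "Q d n (Bf d n)" for d n
    unfolding Bf_def by (rule someI_ex) (use n3_global[OF nf, of n d] in \<open>auto simp: Q_def\<close>)
  define S where "S = (\<lambda>(d, n). Bf d n) ` ({VX, VY, VZ} \<times> {..3::nat})"
  have fS: "finite S" unfolding S_def by auto
  define B where "B = Max S"
  have le: "Bf d n \<le> B" if "n \<le> 3" for d n
  proof -
    have "d \<in> {VX, VY, VZ}" by (cases d) auto
    then have "Bf d n \<in> S" unfolding S_def using that by force
    then show ?thesis unfolding B_def using fS by simp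
  qed
  have B0: "B \<ge> 0" using le[of 0 VX] QB[of VX 0] unfolding Q_def by auto
  have "\<bar>pdw (replicate n d) f p\<bar> \<le> B / (1 + norm p) ^ (n + 1)" if "n \<le> 3" for d n p
  proof -
    have "\<bar>pdw (replicate n d) f p\<bar> \<le> Bf d n / (1 + norm p) ^ (n + 1)" using QB[of d n] unfolding Q_def by blast
    also have "\<dots> \<le> B / (1 + norm p) ^ (n + 1)" using le[OF that] by (intro divide_right_mono) auto
    finally show ?thesis .
  qed
  with B0 show ?thesis by blast
qed

lemma pdw0[simp]: "pdw (replicate 0 d) f = f" by simp

lemma decay2:
  fixes g :: "real \<Rightarrow> complex"
  assumes gi: "g integrable_on UNIV" and gb: "\<And>t. norm (t, z) > 1 \<Longrightarrow> cmod (g t) \<le> C / norm (t, z) ^ 3"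
    and z: "\<bar>z\<bar> > 1"
  shows "cmod (integral UNIV g) \<le> max C 0 * pi / z\<^sup>2"
proof -
  have bnd: "norm (g t) \<le> (max C 0 / \<bar>z\<bar>) / (t\<^sup>2 + \<bar>z\<bar>\<^sup>2)" for t
  proof -
    have nz: "norm (t, z) \<ge> \<bar>z\<bar>"
      by (metis norm_Pair real_norm_def real_sqrt_sum_squares_ge2)
    then have gt: "norm (t, z) > 1" using z by simp
    have sq: "(norm (t, z))\<^sup>2 = t\<^sup>2 + \<bar>z\<bar>\<^sup>2" by (simp add: norm2_sq)
    have "cmod (g t) \<le> max C 0 / norm (t, z) ^ 3"
      using gb[OF gt] gt by (smt (verit) divide_right_mono zero_le_power norm_ge_zero)
    also have "\<dots> = max C 0 / (norm (t, z) * (t\<^sup>2 + \<bar>z\<bar>\<^sup>2))"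
    proof -
      have "norm (t, z) ^ 3 = norm (t, z) * (norm (t, z))\<^sup>2" by (simp add: power3_eq_cube power2_eq_square)
      then show ?thesis by (simp only: sq)
    qed
    also have "\<dots> \<le> max C 0 / (\<bar>z\<bar> * (t\<^sup>2 + \<bar>z\<bar>\<^sup>2))"
      using z nz by (intro divide_left_mono mult_right_mono mult_pos_pos) (auto simp: add_nonneg_pos)
    finally show ?thesis by simp
  qed
  have "cmod (integral UNIV g) \<le> (max C 0 / \<bar>z\<bar>) * pi / \<bar>z\<bar>"
    by (rule rho_bound[OF gi _ _ bnd]) (use z in auto)
  also have "\<dots> = max C 0 * pi / z\<^sup>2" by (simp add: power2_eq_square abs_mult_self_eq)
  finally show ?thesis .
qed

lemma n3_bnds:
  assumes nf: "normal3 f"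
  obtains B where "B \<ge> 0"
    "\<And>d p. \<bar>pdw (replicate 0 d) f p\<bar> \<le> B / (1 + norm p) ^ 1"
    "\<And>d p. \<bar>pdw (replicate (Suc 0) d) f p\<bar> \<le> B / (1 + norm p) ^ 2"
    "\<And>d p. \<bar>pdw (replicate (Suc (Suc 0)) d) f p\<bar> \<le> B / (1 + norm p) ^ 3"
    "\<And>d p. \<bar>pdw (replicate (Suc (Suc (Suc 0))) d) f p\<bar> \<le> B / (1 + norm p) ^ 4"
proof -
  obtain B where B: "B \<ge> 0" "\<And>d n p. n \<le> 3 \<Longrightarrow> \<bar>pdw (replicate n d) f p\<bar> \<le> B / (1 + norm p) ^ (n + 1)"
    using n3_unif[OF nf] by blast
  have e0: "0 + 1 = (1::nat)" and e1: "Suc 0 + 1 = (2::nat)" and e2: "Suc (Suc 0) + 1 = (3::nat)"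
    and e3: "Suc (Suc (Suc 0)) + 1 = (4::nat)" by simp_all
  show ?thesis
  proof (rule that[OF B(1)])
    show "\<bar>pdw (replicate 0 d) f p\<bar> \<le> B / (1 + norm p) ^ 1" for d p by (rule B(2)[of 0 d p, unfolded e0]) simp
    show "\<bar>pdw (replicate (Suc 0) d) f p\<bar> \<le> B / (1 + norm p) ^ 2" for d p by (rule B(2)[of "Suc 0" d p, unfolded e1]) simp
    show "\<bar>pdw (replicate (Suc (Suc 0)) d) f p\<bar> \<le> B / (1 + norm p) ^ 3" for d p by (rule B(2)[of "Suc (Suc 0)" d p, unfolded e2]) simp
    show "\<bar>pdw (replicate (Suc (Suc (Suc 0))) d) f p\<bar> \<le> B / (1 + norm p) ^ 4" for d p by (rule B(2)[of "Suc (Suc (Suc 0))" d p, unfolded e3]) simp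
  qed
qed

lemma n3_C3:
  assumes nf: "normal3 f"
  obtains C where "\<And>p. norm p > 1 \<Longrightarrow> \<bar>pdw (replicate (Suc (Suc (Suc 0))) d) f p\<bar> \<le> C / norm p ^ 4"
proof -
  have e3: "Suc (Suc (Suc 0)) + 1 = (4::nat)" by simp
  obtain C where "\<forall>p. norm p > 1 \<longrightarrow> \<bar>pdw (replicate (Suc (Suc (Suc 0))) d) f p\<bar> \<le> C / norm p ^ (Suc (Suc (Suc 0)) + 1)"
    using n3_bound[OF nf] by blast
  then show ?thesis using that unfolding e3 by blast
qed

lemma normc: "\<bar>x\<bar> \<le> norm (x::real, y::real, z::real)" "\<bar>y\<bar> \<le> norm (x, y, z)" "\<bar>z\<bar> \<le> norm (x, y, z)"
proof -
  have e: "(norm (x, y, z))\<^sup>2 = x\<^sup>2 + y\<^sup>2 + z\<^sup>2" by (rule norm3_sq)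
  have "x\<^sup>2 \<le> (norm (x, y, z))\<^sup>2" "y\<^sup>2 \<le> (norm (x, y, z))\<^sup>2" "z\<^sup>2 \<le> (norm (x, y, z))\<^sup>2"
    unfolding e by auto
  then show "\<bar>x\<bar> \<le> norm (x, y, z)" "\<bar>y\<bar> \<le> norm (x, y, z)" "\<bar>z\<bar> \<le> norm (x, y, z)"
    by (metis abs_le_square_iff abs_norm_cancel)+
qed

lemma instA:
  assumes nf: "normal3 f" and k: "k \<noteq> 0"
  shows "((\<lambda>r. integral {-r..r} (\<lambda>x. of_real (f (x, y, z)) * ef k x)) \<longlongrightarrow> FA f k y z) at_top"
    and "FA f k y z = integral UNIV (\<lambda>t. of_real (pdw (replicate (Suc (Suc (Suc 0))) VX) f (t, y, z)) * ef k t) / (\<i> * of_real k) ^ 3"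
    and "(\<lambda>t. of_real (pdw (replicate (Suc (Suc (Suc 0))) VX) f (t, y, z)) * ef k t) integrable_on UNIV"
proof -
  obtain B where B: "B \<ge> 0"
    "\<And>d p. \<bar>pdw (replicate 0 d) f p\<bar> \<le> B / (1 + norm p) ^ 1"
    "\<And>d p. \<bar>pdw (replicate (Suc 0) d) f p\<bar> \<le> B / (1 + norm p) ^ 2"
    "\<And>d p. \<bar>pdw (replicate (Suc (Suc 0)) d) f p\<bar> \<le> B / (1 + norm p) ^ 3"
    "\<And>d p. \<bar>pdw (replicate (Suc (Suc (Suc 0))) d) f p\<bar> \<le> B / (1 + norm p) ^ 4"
    using n3_bnds[OF nf] by blast
  note L = L1w[where ?g0.0="pdw (replicate 0 VX) f" and ?g1.0="pdw (replicate (Suc 0) VX) f" and ?g2.0="pdw (replicate (Suc (Suc 0)) VX) f"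
      and ?g3.0="pdw (replicate (Suc (Suc (Suc 0))) VX) f" and P="\<lambda>t. (t, y, z)" and B=B, OF k dX[OF nf] dX[OF nf] dX[OF nf]]
  have cP: "continuous_on UNIV (\<lambda>t::real. (t, y, z))" by (intro continuous_intros)
  have nP: "\<bar>t::real\<bar> \<le> norm (t, y, z)" for t by (simp add: normc)
  note L' = L[OF cP n3_cont[OF nf] nP B(1) B(2) B(3) B(4) B(5)]
  show "(\<lambda>t. of_real (pdw (replicate (Suc (Suc (Suc 0))) VX) f (t, y, z)) * ef k t) integrable_on UNIV"
    by (rule L'(1))
  have lim: "((\<lambda>r. integral {-r..r} (\<lambda>x. of_real (f (x, y, z)) * ef k x)) \<longlongrightarrow>
     integral UNIV (\<lambda>t. of_real (pdw (replicate (Suc (Suc (Suc 0))) VX) f (t, y, z)) * ef k t) / (\<i> * of_real k) ^ 3) at_top"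
    using L'(2) by simp
  then show "FA f k y z = integral UNIV (\<lambda>t. of_real (pdw (replicate (Suc (Suc (Suc 0))) VX) f (t, y, z)) * ef k t) / (\<i> * of_real k) ^ 3"
    unfolding FA_def by (intro tendsto_Lim) auto
  with lim show "((\<lambda>r. integral {-r..r} (\<lambda>x. of_real (f (x, y, z)) * ef k x)) \<longlongrightarrow> FA f k y z) at_top"
    by simp
qed

lemma decayA:
  assumes nf: "normal3 f" and k: "k \<noteq> 0"
  shows "\<exists>C. \<forall>y z. norm (y, z) > 1 \<longrightarrow> cmod (FA f k y z) \<le> C / norm (y, z) ^ 3"
proof -
  obtain C where C: "\<And>p. norm p > 1 \<Longrightarrow> \<bar>pdw (replicate (Suc (Suc (Suc 0))) VX) f p\<bar> \<le> C / norm p ^ 4"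
    using n3_C3[OF nf] by blast
  have "cmod (FA f k y z) \<le> (max C 0 * pi / \<bar>k\<bar> ^ 3) / norm (y, z) ^ 3" if "norm (y, z) > 1" for y z
    unfolding instA(2)[OF nf k]
    by (rule decay[OF instA(3)[OF nf k] k C _ that]) (simp_all add: norm3_sq norm2_sq add_ac)
  then show ?thesis by blast
qed

lemma instB:
  assumes nf: "normal3 f" and k: "k \<noteq> 0"
  shows "((\<lambda>r. integral {-r..r} (\<lambda>y. of_real (f (x, y, z)) * ef k y)) \<longlongrightarrow> FB f x k z) at_top"
    and "FB f x k z = integral UNIV (\<lambda>t. of_real (pdw (replicate (Suc (Suc (Suc 0))) VY) f (x, t, z)) * ef k t) / (\<i> * of_real k) ^ 3"
    and "(\<lambda>t. of_real (pdw (replicate (Suc (Suc (Suc 0))) VY) f (x, t, z)) * ef k t) integrable_on UNIV"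
proof -
  obtain B where B: "B \<ge> 0"
    "\<And>d p. \<bar>pdw (replicate 0 d) f p\<bar> \<le> B / (1 + norm p) ^ 1"
    "\<And>d p. \<bar>pdw (replicate (Suc 0) d) f p\<bar> \<le> B / (1 + norm p) ^ 2"
    "\<And>d p. \<bar>pdw (replicate (Suc (Suc 0)) d) f p\<bar> \<le> B / (1 + norm p) ^ 3"
    "\<And>d p. \<bar>pdw (replicate (Suc (Suc (Suc 0))) d) f p\<bar> \<le> B / (1 + norm p) ^ 4"
    using n3_bnds[OF nf] by blast
  note L = L1w[where ?g0.0="pdw (replicate 0 VY) f" and ?g1.0="pdw (replicate (Suc 0) VY) f" and ?g2.0="pdw (replicate (Suc (Suc 0)) VY) f"
      and ?g3.0="pdw (replicate (Suc (Suc (Suc 0))) VY) f" and P="\<lambda>t. (x, t, z)" and B=B, OF k dY[OF nf] dY[OF nf] dY[OF nf]]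
  have cP: "continuous_on UNIV (\<lambda>t::real. (x, t, z))" by (intro continuous_intros)
  have nP: "\<bar>t::real\<bar> \<le> norm (x, t, z)" for t by (simp add: normc)
  note L' = L[OF cP n3_cont[OF nf] nP B(1) B(2) B(3) B(4) B(5)]
  show "(\<lambda>t. of_real (pdw (replicate (Suc (Suc (Suc 0))) VY) f (x, t, z)) * ef k t) integrable_on UNIV"
    by (rule L'(1))
  have lim: "((\<lambda>r. integral {-r..r} (\<lambda>y. of_real (f (x, y, z)) * ef k y)) \<longlongrightarrow>
     integral UNIV (\<lambda>t. of_real (pdw (replicate (Suc (Suc (Suc 0))) VY) f (x, t, z)) * ef k t) / (\<i> * of_real k) ^ 3) at_top"
    using L'(2) by simp
  then show "FB f x k z = integral UNIV (\<lambda>t. of_real (pdw (replicate (Suc (Suc (Suc 0))) VY) f (x, t, z)) * ef k t) / (\<i> * of_real k) ^ 3"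
    unfolding FB_def by (intro tendsto_Lim) auto
  with lim show "((\<lambda>r. integral {-r..r} (\<lambda>y. of_real (f (x, y, z)) * ef k y)) \<longlongrightarrow> FB f x k z) at_top"
    by simp
qed

lemma decayB:
  assumes nf: "normal3 f" and k: "k \<noteq> 0"
  shows "\<exists>C. \<forall>x z. norm (x, z) > 1 \<longrightarrow> cmod (FB f x k z) \<le> C / norm (x, z) ^ 3"
proof -
  obtain C where C: "\<And>p. norm p > 1 \<Longrightarrow> \<bar>pdw (replicate (Suc (Suc (Suc 0))) VY) f p\<bar> \<le> C / norm p ^ 4"
    using n3_C3[OF nf] by blast
  have "cmod (FB f x k z) \<le> (max C 0 * pi / \<bar>k\<bar> ^ 3) / norm (x, z) ^ 3" if "norm (x, z) > 1" for x z
    unfolding instB(2)[OF nf k]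
    by (rule decay[OF instB(3)[OF nf k] k C _ that]) (simp_all add: norm3_sq norm2_sq add_ac)
  then show ?thesis by blast
qed

lemma instC:
  assumes nf: "normal3 f" and k: "k \<noteq> 0"
  shows "((\<lambda>r. integral {-r..r} (\<lambda>z. of_real (f (x, y, z)) * ef k z)) \<longlongrightarrow> FC f x y k) at_top"
    and "FC f x y k = integral UNIV (\<lambda>t. of_real (pdw (replicate (Suc (Suc (Suc 0))) VZ) f (x, y, t)) * ef k t) / (\<i> * of_real k) ^ 3"
    and "(\<lambda>t. of_real (pdw (replicate (Suc (Suc (Suc 0))) VZ) f (x, y, t)) * ef k t) integrable_on UNIV"
proof -
  obtain B where B: "B \<ge> 0"
    "\<And>d p. \<bar>pdw (replicate 0 d) f p\<bar> \<le> B / (1 + norm p) ^ 1"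
    "\<And>d p. \<bar>pdw (replicate (Suc 0) d) f p\<bar> \<le> B / (1 + norm p) ^ 2"
    "\<And>d p. \<bar>pdw (replicate (Suc (Suc 0)) d) f p\<bar> \<le> B / (1 + norm p) ^ 3"
    "\<And>d p. \<bar>pdw (replicate (Suc (Suc (Suc 0))) d) f p\<bar> \<le> B / (1 + norm p) ^ 4"
    using n3_bnds[OF nf] by blast
  note L = L1w[where ?g0.0="pdw (replicate 0 VZ) f" and ?g1.0="pdw (replicate (Suc 0) VZ) f" and ?g2.0="pdw (replicate (Suc (Suc 0)) VZ) f"
      and ?g3.0="pdw (replicate (Suc (Suc (Suc 0))) VZ) f" and P="\<lambda>t. (x, y, t)" and B=B, OF k dZ[OF nf] dZ[OF nf] dZ[OF nf]]
  have cP: "continuous_on UNIV (\<lambda>t::real. (x, y, t))" by (intro continuous_intros)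
  have nP: "\<bar>t::real\<bar> \<le> norm (x, y, t)" for t by (simp add: normc)
  note L' = L[OF cP n3_cont[OF nf] nP B(1) B(2) B(3) B(4) B(5)]
  show "(\<lambda>t. of_real (pdw (replicate (Suc (Suc (Suc 0))) VZ) f (x, y, t)) * ef k t) integrable_on UNIV"
    by (rule L'(1))
  have lim: "((\<lambda>r. integral {-r..r} (\<lambda>z. of_real (f (x, y, z)) * ef k z)) \<longlongrightarrow>
     integral UNIV (\<lambda>t. of_real (pdw (replicate (Suc (Suc (Suc 0))) VZ) f (x, y, t)) * ef k t) / (\<i> * of_real k) ^ 3) at_top"
    using L'(2) by simp
  then show "FC f x y k = integral UNIV (\<lambda>t. of_real (pdw (replicate (Suc (Suc (Suc 0))) VZ) f (x, y, t)) * ef k t) / (\<i> * of_real k) ^ 3"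
    unfolding FC_def by (intro tendsto_Lim) auto
  with lim show "((\<lambda>r. integral {-r..r} (\<lambda>z. of_real (f (x, y, z)) * ef k z)) \<longlongrightarrow> FC f x y k) at_top"
    by simp
qed

lemma decayC:
  assumes nf: "normal3 f" and k: "k \<noteq> 0"
  shows "\<exists>C. \<forall>x y. norm (x, y) > 1 \<longrightarrow> cmod (FC f x y k) \<le> C / norm (x, y) ^ 3"
proof -
  obtain C where C: "\<And>p. norm p > 1 \<Longrightarrow> \<bar>pdw (replicate (Suc (Suc (Suc 0))) VZ) f p\<bar> \<le> C / norm p ^ 4"
    using n3_C3[OF nf] by blast
  have "cmod (FC f x y k) \<le> (max C 0 * pi / \<bar>k\<bar> ^ 3) / norm (x, y) ^ 3" if "norm (x, y) > 1" for x y
    unfolding instC(2)[OF nf k]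
    by (rule decay[OF instC(3)[OF nf k] k C _ that]) (simp_all add: norm3_sq norm2_sq add_ac)
  then show ?thesis by blast
qed

lemma f_cont: "normal3 f \<Longrightarrow> continuous_on UNIV f"
  using n3_cont[of f "[]"] by simp

lemma instFF:
  assumes nf: "normal3 f" and k1: "k1 \<noteq> 0" and k2: "k2 \<noteq> 0"
  shows "((\<lambda>(r, s). integral {-r..r} (\<lambda>y. integral {-s..s}
          (\<lambda>x. complex_of_real (f (x, y, z)) * ef k1 x * ef k2 y))) \<longlongrightarrow> FF f k1 k2 z) (at_top \<times>\<^sub>F at_top)"
    and "((\<lambda>y. FA f k1 y z * ef k2 y) has_integral FF f k1 k2 z) UNIV"
    and "((\<lambda>x. FB f x k2 z * ef k1 x) has_integral FF f k1 k2 z) UNIV"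
proof -
  obtain B where B: "B \<ge> 0"
    "\<And>d p. \<bar>pdw (replicate 0 d) f p\<bar> \<le> B / (1 + norm p) ^ 1"
    "\<And>d p. \<bar>pdw (replicate (Suc 0) d) f p\<bar> \<le> B / (1 + norm p) ^ 2"
    "\<And>d p. \<bar>pdw (replicate (Suc (Suc 0)) d) f p\<bar> \<le> B / (1 + norm p) ^ 3"
    "\<And>d p. \<bar>pdw (replicate (Suc (Suc (Suc 0))) d) f p\<bar> \<le> B / (1 + norm p) ^ 4"
    using n3_bnds[OF nf] by blast
  have fc: "continuous_on UNIV f" by (rule f_cont[OF nf])
  have dy: "((\<lambda>t. pdw (replicate 0 VX) f (a, t, z)) has_real_derivative pdw (replicate (Suc 0) VY) f (a, b, z)) (at b)" for a b
    using dY[OF nf, where n=0 and x=a and y=b and z=z] by simp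
  have cP: "continuous_on UNIV (\<lambda>q::real\<times>real. (fst q, snd q, z))" by (intro continuous_intros)
  have nP: "a\<^sup>2 + b\<^sup>2 \<le> (norm (a, b, z))\<^sup>2" for a b :: real by (simp add: norm3_sq)
  note L = L2w[where ?g0.0="pdw (replicate 0 VX) f" and ?g1.0="pdw (replicate (Suc 0) VX) f"
      and ?g2.0="pdw (replicate (Suc (Suc 0)) VX) f" and ?g3.0="pdw (replicate (Suc (Suc (Suc 0))) VX) f"
      and gy="pdw (replicate (Suc 0) VY) f" and P="\<lambda>a b. (a, b, z)" and B=B,
      OF k1 k2 dX[OF nf] dX[OF nf] dX[OF nf] dy cP n3_cont[OF nf] n3_cont[OF nf] n3_cont[OF nf] n3_cont[OF nf]
      n3_cont[OF nf] nP B(1) B(2) B(3) B(4) B(5) B(3)]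
  have eqA: "(\<lambda>y. integral UNIV (\<lambda>x. of_real (pdw (replicate (Suc (Suc (Suc 0))) VX) f (x, y, z)) * ef k1 x) / (\<i> * of_real k1) ^ 3 * ef k2 y)
      = (\<lambda>y. FA f k1 y z * ef k2 y)"
    using instA(2)[OF nf k1] by simp
  have intA: "(\<lambda>y. FA f k1 y z * ef k2 y) integrable_on UNIV" using L(1) unfolding eqA .
  have limA: "((\<lambda>(r, s). integral {-r..r} (\<lambda>y. integral {-s..s}
          (\<lambda>x. complex_of_real (f (x, y, z)) * ef k1 x * ef k2 y))) \<longlongrightarrow> integral UNIV (\<lambda>y. FA f k1 y z * ef k2 y)) (at_top \<times>\<^sub>F at_top)"
    using L(2) unfolding eqA by simp
  have FFeq: "FF f k1 k2 z = integral UNIV (\<lambda>y. FA f k1 y z * ef k2 y)"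
    unfolding FF_def by (rule tendsto_Lim[OF _ limA]) (simp add: prod_filter_eq_bot)
  show "((\<lambda>(r, s). integral {-r..r} (\<lambda>y. integral {-s..s}
          (\<lambda>x. complex_of_real (f (x, y, z)) * ef k1 x * ef k2 y))) \<longlongrightarrow> FF f k1 k2 z) (at_top \<times>\<^sub>F at_top)"
    using limA unfolding FFeq .
  show "((\<lambda>y. FA f k1 y z * ef k2 y) has_integral FF f k1 k2 z) UNIV"
    unfolding FFeq using intA by (rule integrable_integral)
  have dy': "((\<lambda>t. pdw (replicate 0 VY) f (t, a, z)) has_real_derivative pdw (replicate (Suc 0) VX) f (b, a, z)) (at b)" for a b
    using dX[OF nf, where n=0 and x=b and y=a and z=z] by simp
  have cP': "continuous_on UNIV (\<lambda>q::real\<times>real. (snd q, fst q, z))" by (intro continuous_intros)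
  have nP': "a\<^sup>2 + b\<^sup>2 \<le> (norm (b, a, z))\<^sup>2" for a b :: real by (simp add: norm3_sq)
  note L' = L2w[where ?g0.0="pdw (replicate 0 VY) f" and ?g1.0="pdw (replicate (Suc 0) VY) f"
      and ?g2.0="pdw (replicate (Suc (Suc 0)) VY) f" and ?g3.0="pdw (replicate (Suc (Suc (Suc 0))) VY) f"
      and gy="pdw (replicate (Suc 0) VX) f" and P="\<lambda>a b. (b, a, z)" and B=B,
      OF k2 k1 dY[OF nf] dY[OF nf] dY[OF nf] dy' cP' n3_cont[OF nf] n3_cont[OF nf] n3_cont[OF nf] n3_cont[OF nf]
      n3_cont[OF nf] nP' B(1) B(2) B(3) B(4) B(5) B(3)]
  have eqB: "(\<lambda>x. integral UNIV (\<lambda>y. of_real (pdw (replicate (Suc (Suc (Suc 0))) VY) f (x, y, z)) * ef k2 y) / (\<i> * of_real k2) ^ 3 * ef k1 x)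
      = (\<lambda>x. FB f x k2 z * ef k1 x)"
    using instB(2)[OF nf k2] by simp
  have intB: "(\<lambda>x. FB f x k2 z * ef k1 x) integrable_on UNIV" using L'(1) unfolding eqB .
  have limB0: "((\<lambda>(r, s). integral {-r..r} (\<lambda>x. integral {-s..s}
          (\<lambda>y. complex_of_real (f (x, y, z)) * ef k1 x * ef k2 y))) \<longlongrightarrow> integral UNIV (\<lambda>x. FB f x k2 z * ef k1 x)) (at_top \<times>\<^sub>F at_top)"
    using L'(2) unfolding eqB by (simp add: mult_ac)
  have Fc: "continuous_on UNIV (\<lambda>q. (\<lambda>x y. complex_of_real (f (x, y, z)) * ef k1 x * ef k2 y) (fst q) (snd q))"
    by (auto intro!: continuous_intros continuous_on_compose2[OF fc])
  have limB: "((\<lambda>(r, s). integral {-r..r} (\<lambda>y. integral {-s..s}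
          (\<lambda>x. complex_of_real (f (x, y, z)) * ef k1 x * ef k2 y))) \<longlongrightarrow> integral UNIV (\<lambda>x. FB f x k2 z * ef k1 x)) (at_top \<times>\<^sub>F at_top)"
    using swap_lim[OF Fc] limB0 by simp
  have FFeq': "FF f k1 k2 z = integral UNIV (\<lambda>x. FB f x k2 z * ef k1 x)"
    unfolding FF_def by (rule tendsto_Lim[OF _ limB]) (simp add: prod_filter_eq_bot)
  show "((\<lambda>x. FB f x k2 z * ef k1 x) has_integral FF f k1 k2 z) UNIV"
    unfolding FFeq' using intB by (rule integrable_integral)
qed

lemma instFG:
  assumes nf: "normal3 f" and k1: "k1 \<noteq> 0" and k3: "k3 \<noteq> 0"
  shows "((\<lambda>(r, s). integral {-r..r} (\<lambda>z. integral {-s..s}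
          (\<lambda>x. complex_of_real (f (x, y, z)) * ef k1 x * ef k3 z))) \<longlongrightarrow> FG f k1 y k3) (at_top \<times>\<^sub>F at_top)"
    and "((\<lambda>z. FA f k1 y z * ef k3 z) has_integral FG f k1 y k3) UNIV"
    and "((\<lambda>x. FC f x y k3 * ef k1 x) has_integral FG f k1 y k3) UNIV"
proof -
  obtain B where B: "B \<ge> 0"
    "\<And>d p. \<bar>pdw (replicate 0 d) f p\<bar> \<le> B / (1 + norm p) ^ 1"
    "\<And>d p. \<bar>pdw (replicate (Suc 0) d) f p\<bar> \<le> B / (1 + norm p) ^ 2"
    "\<And>d p. \<bar>pdw (replicate (Suc (Suc 0)) d) f p\<bar> \<le> B / (1 + norm p) ^ 3"
    "\<And>d p. \<bar>pdw (replicate (Suc (Suc (Suc 0))) d) f p\<bar> \<le> B / (1 + norm p) ^ 4"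
    using n3_bnds[OF nf] by blast
  have fc: "continuous_on UNIV f" by (rule f_cont[OF nf])
  have dy: "((\<lambda>t. pdw (replicate 0 VX) f (a, y, t)) has_real_derivative pdw (replicate (Suc 0) VZ) f (a, y, b)) (at b)" for a b
    using dZ[OF nf, where n=0 and x=a and y=y and z=b] by simp
  have cP: "continuous_on UNIV (\<lambda>q::real\<times>real. (fst q, y, snd q))" by (intro continuous_intros)
  have nP: "a\<^sup>2 + b\<^sup>2 \<le> (norm (a, y, b))\<^sup>2" for a b :: real by (simp add: norm3_sq)
  note L = L2w[where ?g0.0="pdw (replicate 0 VX) f" and ?g1.0="pdw (replicate (Suc 0) VX) f"
      and ?g2.0="pdw (replicate (Suc (Suc 0)) VX) f" and ?g3.0="pdw (replicate (Suc (Suc (Suc 0))) VX) f"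
      and gy="pdw (replicate (Suc 0) VZ) f" and P="\<lambda>a b. (a, y, b)" and B=B,
      OF k1 k3 dX[OF nf] dX[OF nf] dX[OF nf] dy cP n3_cont[OF nf] n3_cont[OF nf] n3_cont[OF nf] n3_cont[OF nf]
      n3_cont[OF nf] nP B(1) B(2) B(3) B(4) B(5) B(3)]
  have eqA: "(\<lambda>z. integral UNIV (\<lambda>x. of_real (pdw (replicate (Suc (Suc (Suc 0))) VX) f (x, y, z)) * ef k1 x) / (\<i> * of_real k1) ^ 3 * ef k3 z)
      = (\<lambda>z. FA f k1 y z * ef k3 z)"
    using instA(2)[OF nf k1] by simp
  have intA: "(\<lambda>z. FA f k1 y z * ef k3 z) integrable_on UNIV" using L(1) unfolding eqA .
  have limA: "((\<lambda>(r, s). integral {-r..r} (\<lambda>z. integral {-s..s}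
          (\<lambda>x. complex_of_real (f (x, y, z)) * ef k1 x * ef k3 z))) \<longlongrightarrow> integral UNIV (\<lambda>z. FA f k1 y z * ef k3 z)) (at_top \<times>\<^sub>F at_top)"
    using L(2) unfolding eqA by simp
  have FGeq: "FG f k1 y k3 = integral UNIV (\<lambda>z. FA f k1 y z * ef k3 z)"
    unfolding FG_def by (rule tendsto_Lim[OF _ limA]) (simp add: prod_filter_eq_bot)
  show "((\<lambda>(r, s). integral {-r..r} (\<lambda>z. integral {-s..s}
          (\<lambda>x. complex_of_real (f (x, y, z)) * ef k1 x * ef k3 z))) \<longlongrightarrow> FG f k1 y k3) (at_top \<times>\<^sub>F at_top)"
    using limA unfolding FGeq .
  show "((\<lambda>z. FA f k1 y z * ef k3 z) has_integral FG f k1 y k3) UNIV"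
    unfolding FGeq using intA by (rule integrable_integral)
  have dy': "((\<lambda>t. pdw (replicate 0 VZ) f (t, y, a)) has_real_derivative pdw (replicate (Suc 0) VX) f (b, y, a)) (at b)" for a b
    using dX[OF nf, where n=0 and x=b and y=y and z=a] by simp
  have cP': "continuous_on UNIV (\<lambda>q::real\<times>real. (snd q, y, fst q))" by (intro continuous_intros)
  have nP': "a\<^sup>2 + b\<^sup>2 \<le> (norm (b, y, a))\<^sup>2" for a b :: real by (simp add: norm3_sq)
  note L' = L2w[where ?g0.0="pdw (replicate 0 VZ) f" and ?g1.0="pdw (replicate (Suc 0) VZ) f"
      and ?g2.0="pdw (replicate (Suc (Suc 0)) VZ) f" and ?g3.0="pdw (replicate (Suc (Suc (Suc 0))) VZ) f"
      and gy="pdw (replicate (Suc 0) VX) f" and P="\<lambda>a b. (b, y, a)" and B=B,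
      OF k3 k1 dZ[OF nf] dZ[OF nf] dZ[OF nf] dy' cP' n3_cont[OF nf] n3_cont[OF nf] n3_cont[OF nf] n3_cont[OF nf]
      n3_cont[OF nf] nP' B(1) B(2) B(3) B(4) B(5) B(3)]
  have eqB: "(\<lambda>x. integral UNIV (\<lambda>z. of_real (pdw (replicate (Suc (Suc (Suc 0))) VZ) f (x, y, z)) * ef k3 z) / (\<i> * of_real k3) ^ 3 * ef k1 x)
      = (\<lambda>x. FC f x y k3 * ef k1 x)"
    using instC(2)[OF nf k3] by simp
  have intB: "(\<lambda>x. FC f x y k3 * ef k1 x) integrable_on UNIV" using L'(1) unfolding eqB .
  have limB0: "((\<lambda>(r, s). integral {-r..r} (\<lambda>x. integral {-s..s}
          (\<lambda>z. complex_of_real (f (x, y, z)) * ef k1 x * ef k3 z))) \<longlongrightarrow> integral UNIV (\<lambda>x. FC f x y k3 * ef k1 x)) (at_top \<times>\<^sub>F at_top)"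
    using L'(2) unfolding eqB by (simp add: mult_ac)
  have Fc: "continuous_on UNIV (\<lambda>q. (\<lambda>x z. complex_of_real (f (x, y, z)) * ef k1 x * ef k3 z) (fst q) (snd q))"
    by (auto intro!: continuous_intros continuous_on_compose2[OF fc])
  have limB: "((\<lambda>(r, s). integral {-r..r} (\<lambda>z. integral {-s..s}
          (\<lambda>x. complex_of_real (f (x, y, z)) * ef k1 x * ef k3 z))) \<longlongrightarrow> integral UNIV (\<lambda>x. FC f x y k3 * ef k1 x)) (at_top \<times>\<^sub>F at_top)"
    using swap_lim[OF Fc] limB0 by simp
  have FGeq': "FG f k1 y k3 = integral UNIV (\<lambda>x. FC f x y k3 * ef k1 x)"
    unfolding FG_def by (rule tendsto_Lim[OF _ limB]) (simp add: prod_filter_eq_bot)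
  show "((\<lambda>x. FC f x y k3 * ef k1 x) has_integral FG f k1 y k3) UNIV"
    unfolding FGeq' using intB by (rule integrable_integral)
qed

lemma instFH:
  assumes nf: "normal3 f" and k2: "k2 \<noteq> 0" and k3: "k3 \<noteq> 0"
  shows "((\<lambda>(r, s). integral {-r..r} (\<lambda>z. integral {-s..s}
          (\<lambda>y. complex_of_real (f (x, y, z)) * ef k2 y * ef k3 z))) \<longlongrightarrow> FH f x k2 k3) (at_top \<times>\<^sub>F at_top)"
    and "((\<lambda>z. FB f x k2 z * ef k3 z) has_integral FH f x k2 k3) UNIV"
    and "((\<lambda>y. FC f x y k3 * ef k2 y) has_integral FH f x k2 k3) UNIV"
proof -
  obtain B where B: "B \<ge> 0"
    "\<And>d p. \<bar>pdw (replicate 0 d) f p\<bar> \<le> B / (1 + norm p) ^ 1"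
    "\<And>d p. \<bar>pdw (replicate (Suc 0) d) f p\<bar> \<le> B / (1 + norm p) ^ 2"
    "\<And>d p. \<bar>pdw (replicate (Suc (Suc 0)) d) f p\<bar> \<le> B / (1 + norm p) ^ 3"
    "\<And>d p. \<bar>pdw (replicate (Suc (Suc (Suc 0))) d) f p\<bar> \<le> B / (1 + norm p) ^ 4"
    using n3_bnds[OF nf] by blast
  have fc: "continuous_on UNIV f" by (rule f_cont[OF nf])
  have dy: "((\<lambda>t. pdw (replicate 0 VY) f (x, a, t)) has_real_derivative pdw (replicate (Suc 0) VZ) f (x, a, b)) (at b)" for a b
    using dZ[OF nf, where n=0 and x=x and y=a and z=b] by simp
  have cP: "continuous_on UNIV (\<lambda>q::real\<times>real. (x, fst q, snd q))" by (intro continuous_intros)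
  have nP: "a\<^sup>2 + b\<^sup>2 \<le> (norm (x, a, b))\<^sup>2" for a b :: real by (simp add: norm3_sq)
  note L = L2w[where ?g0.0="pdw (replicate 0 VY) f" and ?g1.0="pdw (replicate (Suc 0) VY) f"
      and ?g2.0="pdw (replicate (Suc (Suc 0)) VY) f" and ?g3.0="pdw (replicate (Suc (Suc (Suc 0))) VY) f"
      and gy="pdw (replicate (Suc 0) VZ) f" and P="\<lambda>a b. (x, a, b)" and B=B,
      OF k2 k3 dY[OF nf] dY[OF nf] dY[OF nf] dy cP n3_cont[OF nf] n3_cont[OF nf] n3_cont[OF nf] n3_cont[OF nf]
      n3_cont[OF nf] nP B(1) B(2) B(3) B(4) B(5) B(3)]
  have eqA: "(\<lambda>z. integral UNIV (\<lambda>y. of_real (pdw (replicate (Suc (Suc (Suc 0))) VY) f (x, y, z)) * ef k2 y) / (\<i> * of_real k2) ^ 3 * ef k3 z)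
      = (\<lambda>z. FB f x k2 z * ef k3 z)"
    using instB(2)[OF nf k2] by simp
  have intA: "(\<lambda>z. FB f x k2 z * ef k3 z) integrable_on UNIV" using L(1) unfolding eqA .
  have limA: "((\<lambda>(r, s). integral {-r..r} (\<lambda>z. integral {-s..s}
          (\<lambda>y. complex_of_real (f (x, y, z)) * ef k2 y * ef k3 z))) \<longlongrightarrow> integral UNIV (\<lambda>z. FB f x k2 z * ef k3 z)) (at_top \<times>\<^sub>F at_top)"
    using L(2) unfolding eqA by simp
  have FHeq: "FH f x k2 k3 = integral UNIV (\<lambda>z. FB f x k2 z * ef k3 z)"
    unfolding FH_def by (rule tendsto_Lim[OF _ limA]) (simp add: prod_filter_eq_bot)
  show "((\<lambda>(r, s). integral {-r..r} (\<lambda>z. integral {-s..s}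
          (\<lambda>y. complex_of_real (f (x, y, z)) * ef k2 y * ef k3 z))) \<longlongrightarrow> FH f x k2 k3) (at_top \<times>\<^sub>F at_top)"
    using limA unfolding FHeq .
  show "((\<lambda>z. FB f x k2 z * ef k3 z) has_integral FH f x k2 k3) UNIV"
    unfolding FHeq using intA by (rule integrable_integral)
  have dy': "((\<lambda>t. pdw (replicate 0 VZ) f (x, t, a)) has_real_derivative pdw (replicate (Suc 0) VY) f (x, b, a)) (at b)" for a b
    using dY[OF nf, where n=0 and x=x and y=b and z=a] by simp
  have cP': "continuous_on UNIV (\<lambda>q::real\<times>real. (x, snd q, fst q))" by (intro continuous_intros)
  have nP': "a\<^sup>2 + b\<^sup>2 \<le> (norm (x, b, a))\<^sup>2" for a b :: real by (simp add: norm3_sq)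
  note L' = L2w[where ?g0.0="pdw (replicate 0 VZ) f" and ?g1.0="pdw (replicate (Suc 0) VZ) f"
      and ?g2.0="pdw (replicate (Suc (Suc 0)) VZ) f" and ?g3.0="pdw (replicate (Suc (Suc (Suc 0))) VZ) f"
      and gy="pdw (replicate (Suc 0) VY) f" and P="\<lambda>a b. (x, b, a)" and B=B,
      OF k3 k2 dZ[OF nf] dZ[OF nf] dZ[OF nf] dy' cP' n3_cont[OF nf] n3_cont[OF nf] n3_cont[OF nf] n3_cont[OF nf]
      n3_cont[OF nf] nP' B(1) B(2) B(3) B(4) B(5) B(3)]
  have eqB: "(\<lambda>y. integral UNIV (\<lambda>z. of_real (pdw (replicate (Suc (Suc (Suc 0))) VZ) f (x, y, z)) * ef k3 z) / (\<i> * of_real k3) ^ 3 * ef k2 y)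
      = (\<lambda>y. FC f x y k3 * ef k2 y)"
    using instC(2)[OF nf k3] by simp
  have intB: "(\<lambda>y. FC f x y k3 * ef k2 y) integrable_on UNIV" using L'(1) unfolding eqB .
  have limB0: "((\<lambda>(r, s). integral {-r..r} (\<lambda>y. integral {-s..s}
          (\<lambda>z. complex_of_real (f (x, y, z)) * ef k2 y * ef k3 z))) \<longlongrightarrow> integral UNIV (\<lambda>y. FC f x y k3 * ef k2 y)) (at_top \<times>\<^sub>F at_top)"
    using L'(2) unfolding eqB by (simp add: mult_ac)
  have Fc: "continuous_on UNIV (\<lambda>q. (\<lambda>y z. complex_of_real (f (x, y, z)) * ef k2 y * ef k3 z) (fst q) (snd q))"
    by (auto intro!: continuous_intros continuous_on_compose2[OF fc])
  have limB: "((\<lambda>(r, s). integral {-r..r} (\<lambda>z. integral {-s..s}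
          (\<lambda>y. complex_of_real (f (x, y, z)) * ef k2 y * ef k3 z))) \<longlongrightarrow> integral UNIV (\<lambda>y. FC f x y k3 * ef k2 y)) (at_top \<times>\<^sub>F at_top)"
    using swap_lim[OF Fc] limB0 by simp
  have FHeq': "FH f x k2 k3 = integral UNIV (\<lambda>y. FC f x y k3 * ef k2 y)"
    unfolding FH_def by (rule tendsto_Lim[OF _ limB]) (simp add: prod_filter_eq_bot)
  show "((\<lambda>y. FC f x y k3 * ef k2 y) has_integral FH f x k2 k3) UNIV"
    unfolding FHeq' using intB by (rule integrable_integral)
qed

theorem lemma16:
  fixes f :: "real \<times> real \<times> real \<Rightarrow> real"
  assumes "normal3 f"
  shows
   \<comment> \<open>(a) existence of the one-variable transforms\<close>
   "(\<forall>k1 y z. k1 \<noteq> 0 \<longrightarrow>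
      ((\<lambda>r. integral {-r..r} (\<lambda>x. complex_of_real (f (x, y, z)) * ef k1 x)) \<longlongrightarrow> FA f k1 y z) at_top) \<and>
    (\<forall>x k2 z. k2 \<noteq> 0 \<longrightarrow>
      ((\<lambda>r. integral {-r..r} (\<lambda>y. complex_of_real (f (x, y, z)) * ef k2 y)) \<longlongrightarrow> FB f x k2 z) at_top) \<and>
    (\<forall>x y k3. k3 \<noteq> 0 \<longrightarrow>
      ((\<lambda>r. integral {-r..r} (\<lambda>z. complex_of_real (f (x, y, z)) * ef k3 z)) \<longlongrightarrow> FC f x y k3) at_top) \<and>
   \<comment> \<open>(a) moderate decrease 3\<close>
    (\<forall>k1. k1 \<noteq> 0 \<longrightarrow> (\<exists>C. \<forall>y z. norm (y, z) > 1 \<longrightarrow> cmod (FA f k1 y z) \<le> C / norm (y, z) ^ 3)) \<and>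
    (\<forall>k2. k2 \<noteq> 0 \<longrightarrow> (\<exists>C. \<forall>x z. norm (x, z) > 1 \<longrightarrow> cmod (FB f x k2 z) \<le> C / norm (x, z) ^ 3)) \<and>
    (\<forall>k3. k3 \<noteq> 0 \<longrightarrow> (\<exists>C. \<forall>x y. norm (x, y) > 1 \<longrightarrow> cmod (FC f x y k3) \<le> C / norm (x, y) ^ 3)) \<and>
   \<comment> \<open>(b) existence of the two-variable transforms\<close>
    (\<forall>k1 k2 z. k1 \<noteq> 0 \<and> k2 \<noteq> 0 \<longrightarrow>
      ((\<lambda>(r, s). integral {-r..r} (\<lambda>y. integral {-s..s}
          (\<lambda>x. complex_of_real (f (x, y, z)) * ef k1 x * ef k2 y))) \<longlongrightarrow> FF f k1 k2 z)
        (at_top \<times>\<^sub>F at_top)) \<and>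
    (\<forall>k1 y k3. k1 \<noteq> 0 \<and> k3 \<noteq> 0 \<longrightarrow>
      ((\<lambda>(r, s). integral {-r..r} (\<lambda>z. integral {-s..s}
          (\<lambda>x. complex_of_real (f (x, y, z)) * ef k1 x * ef k3 z))) \<longlongrightarrow> FG f k1 y k3)
        (at_top \<times>\<^sub>F at_top)) \<and>
    (\<forall>x k2 k3. k2 \<noteq> 0 \<and> k3 \<noteq> 0 \<longrightarrow>
      ((\<lambda>(r, s). integral {-r..r} (\<lambda>z. integral {-s..s}
          (\<lambda>y. complex_of_real (f (x, y, z)) * ef k2 y * ef k3 z))) \<longlongrightarrow> FH f x k2 k3)
        (at_top \<times>\<^sub>F at_top)) \<and>
   \<comment> \<open>(b) moderate decrease\<close>
    (\<forall>k1 k2. k1 \<noteq> 0 \<and> k2 \<noteq> 0 \<longrightarrow> (\<exists>C. \<forall>z. \<bar>z\<bar> > 1 \<longrightarrow> cmod (FF f k1 k2 z) \<le> C / z\<^sup>2)) \<and>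
    (\<forall>k1 k3. k1 \<noteq> 0 \<and> k3 \<noteq> 0 \<longrightarrow> (\<exists>C. \<forall>y. \<bar>y\<bar> > 1 \<longrightarrow> cmod (FG f k1 y k3) \<le> C / y\<^sup>2)) \<and>
    (\<forall>k2 k3. k2 \<noteq> 0 \<and> k3 \<noteq> 0 \<longrightarrow> (\<exists>C. \<forall>x. \<bar>x\<bar> > 1 \<longrightarrow> cmod (FH f x k2 k3) \<le> C / x\<^sup>2)) \<and>
   \<comment> \<open>(c) iterated transforms\<close>
    (\<forall>k1 k2 z. k1 \<noteq> 0 \<and> k2 \<noteq> 0 \<longrightarrow>
      ((\<lambda>y. FA f k1 y z * ef k2 y) has_integral FF f k1 k2 z) UNIV \<and>
      ((\<lambda>x. FB f x k2 z * ef k1 x) has_integral FF f k1 k2 z) UNIV) \<and>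
    (\<forall>k1 y k3. k1 \<noteq> 0 \<and> k3 \<noteq> 0 \<longrightarrow>
      ((\<lambda>z. FA f k1 y z * ef k3 z) has_integral FG f k1 y k3) UNIV \<and>
      ((\<lambda>x. FC f x y k3 * ef k1 x) has_integral FG f k1 y k3) UNIV) \<and>
    (\<forall>x k2 k3. k2 \<noteq> 0 \<and> k3 \<noteq> 0 \<longrightarrow>
      ((\<lambda>z. FB f x k2 z * ef k3 z) has_integral FH f x k2 k3) UNIV \<and>
      ((\<lambda>y. FC f x y k3 * ef k2 y) has_integral FH f x k2 k3) UNIV)"
proof -
  have nsw: "norm (a, b) = norm (b, a)" for a b :: real by (simp add: norm_Pair add.commute)
  have a1: "\<forall>k1 y z. k1 \<noteq> 0 \<longrightarrow>
      ((\<lambda>r. integral {-r..r} (\<lambda>x. complex_of_real (f (x, y, z)) * ef k1 x)) \<longlongrightarrow> FA f k1 y z) at_top"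
    using instA(1)[OF assms] by blast
  have a2: "\<forall>x k2 z. k2 \<noteq> 0 \<longrightarrow>
      ((\<lambda>r. integral {-r..r} (\<lambda>y. complex_of_real (f (x, y, z)) * ef k2 y)) \<longlongrightarrow> FB f x k2 z) at_top"
    using instB(1)[OF assms] by blast
  have a3: "\<forall>x y k3. k3 \<noteq> 0 \<longrightarrow>
      ((\<lambda>r. integral {-r..r} (\<lambda>z. complex_of_real (f (x, y, z)) * ef k3 z)) \<longlongrightarrow> FC f x y k3) at_top"
    using instC(1)[OF assms] by blast
  have a4: "\<forall>k1. k1 \<noteq> 0 \<longrightarrow> (\<exists>C. \<forall>y z. norm (y, z) > 1 \<longrightarrow> cmod (FA f k1 y z) \<le> C / norm (y, z) ^ 3)"
    using decayA[OF assms] by blast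
  have a5: "\<forall>k2. k2 \<noteq> 0 \<longrightarrow> (\<exists>C. \<forall>x z. norm (x, z) > 1 \<longrightarrow> cmod (FB f x k2 z) \<le> C / norm (x, z) ^ 3)"
    using decayB[OF assms] by blast
  have a6: "\<forall>k3. k3 \<noteq> 0 \<longrightarrow> (\<exists>C. \<forall>x y. norm (x, y) > 1 \<longrightarrow> cmod (FC f x y k3) \<le> C / norm (x, y) ^ 3)"
    using decayC[OF assms] by blast
  have b1: "\<forall>k1 k2 z. k1 \<noteq> 0 \<and> k2 \<noteq> 0 \<longrightarrow>
      ((\<lambda>(r, s). integral {-r..r} (\<lambda>y. integral {-s..s}
          (\<lambda>x. complex_of_real (f (x, y, z)) * ef k1 x * ef k2 y))) \<longlongrightarrow> FF f k1 k2 z)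
        (at_top \<times>\<^sub>F at_top)"
    using instFF(1)[OF assms] by blast
  have b2: "\<forall>k1 y k3. k1 \<noteq> 0 \<and> k3 \<noteq> 0 \<longrightarrow>
      ((\<lambda>(r, s). integral {-r..r} (\<lambda>z. integral {-s..s}
          (\<lambda>x. complex_of_real (f (x, y, z)) * ef k1 x * ef k3 z))) \<longlongrightarrow> FG f k1 y k3)
        (at_top \<times>\<^sub>F at_top)"
    using instFG(1)[OF assms] by blast
  have b3: "\<forall>x k2 k3. k2 \<noteq> 0 \<and> k3 \<noteq> 0 \<longrightarrow>
      ((\<lambda>(r, s). integral {-r..r} (\<lambda>z. integral {-s..s}
          (\<lambda>y. complex_of_real (f (x, y, z)) * ef k2 y * ef k3 z))) \<longlongrightarrow> FH f x k2 k3)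
        (at_top \<times>\<^sub>F at_top)"
    using instFH(1)[OF assms] by blast
  have b4: "\<forall>k1 k2. k1 \<noteq> 0 \<and> k2 \<noteq> 0 \<longrightarrow> (\<exists>C. \<forall>z. \<bar>z\<bar> > 1 \<longrightarrow> cmod (FF f k1 k2 z) \<le> C / z\<^sup>2)"
  proof (intro allI impI)
    fix k1 k2 :: real assume k: "k1 \<noteq> 0 \<and> k2 \<noteq> 0"
    obtain C where C: "\<And>y z. norm (y, z) > 1 \<Longrightarrow> cmod (FA f k1 y z) \<le> C / norm (y, z) ^ 3"
      using decayA[OF assms, of k1] k by blast
    have "cmod (FF f k1 k2 z) \<le> max C 0 * pi / z\<^sup>2" if z: "\<bar>z\<bar> > 1" for z
    proof -
      have hi: "((\<lambda>y. FA f k1 y z * ef k2 y) has_integral FF f k1 k2 z) UNIV"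
        using instFF(2)[OF assms] k by blast
      have "cmod (integral UNIV (\<lambda>y. FA f k1 y z * ef k2 y)) \<le> max C 0 * pi / z\<^sup>2"
        by (rule decay2[OF _ _ z]) (use hi C in \<open>auto simp: norm_mult\<close>)
      then show ?thesis using integral_unique[OF hi] by simp
    qed
    then show "\<exists>C. \<forall>z. \<bar>z\<bar> > 1 \<longrightarrow> cmod (FF f k1 k2 z) \<le> C / z\<^sup>2" by blast
  qed
  have b5: "\<forall>k1 k3. k1 \<noteq> 0 \<and> k3 \<noteq> 0 \<longrightarrow> (\<exists>C. \<forall>y. \<bar>y\<bar> > 1 \<longrightarrow> cmod (FG f k1 y k3) \<le> C / y\<^sup>2)"
  proof (intro allI impI)
    fix k1 k3 :: real assume k: "k1 \<noteq> 0 \<and> k3 \<noteq> 0"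
    obtain C where C: "\<And>y z. norm (y, z) > 1 \<Longrightarrow> cmod (FA f k1 y z) \<le> C / norm (y, z) ^ 3"
      using decayA[OF assms, of k1] k by blast
    have "cmod (FG f k1 y k3) \<le> max C 0 * pi / y\<^sup>2" if y: "\<bar>y\<bar> > 1" for y
    proof -
      have hi: "((\<lambda>z. FA f k1 y z * ef k3 z) has_integral FG f k1 y k3) UNIV"
        using instFG(2)[OF assms] k by blast
      have "cmod (integral UNIV (\<lambda>z. FA f k1 y z * ef k3 z)) \<le> max C 0 * pi / y\<^sup>2"
      proof (rule decay2[OF _ _ y])
        show "(\<lambda>z. FA f k1 y z * ef k3 z) integrable_on UNIV" using hi by blast
        show "cmod (FA f k1 y t * ef k3 t) \<le> C / norm (t, y) ^ 3" if "norm (t, y) > 1" for t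
          using C[of y t] that nsw[of t y] by (simp add: norm_mult)
      qed
      then show ?thesis using integral_unique[OF hi] by simp
    qed
    then show "\<exists>C. \<forall>y. \<bar>y\<bar> > 1 \<longrightarrow> cmod (FG f k1 y k3) \<le> C / y\<^sup>2" by blast
  qed
  have b6: "\<forall>k2 k3. k2 \<noteq> 0 \<and> k3 \<noteq> 0 \<longrightarrow> (\<exists>C. \<forall>x. \<bar>x\<bar> > 1 \<longrightarrow> cmod (FH f x k2 k3) \<le> C / x\<^sup>2)"
  proof (intro allI impI)
    fix k2 k3 :: real assume k: "k2 \<noteq> 0 \<and> k3 \<noteq> 0"
    obtain C where C: "\<And>x z. norm (x, z) > 1 \<Longrightarrow> cmod (FB f x k2 z) \<le> C / norm (x, z) ^ 3"
      using decayB[OF assms, of k2] k by blast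
    have "cmod (FH f x k2 k3) \<le> max C 0 * pi / x\<^sup>2" if x: "\<bar>x\<bar> > 1" for x
    proof -
      have hi: "((\<lambda>z. FB f x k2 z * ef k3 z) has_integral FH f x k2 k3) UNIV"
        using instFH(2)[OF assms] k by blast
      have "cmod (integral UNIV (\<lambda>z. FB f x k2 z * ef k3 z)) \<le> max C 0 * pi / x\<^sup>2"
      proof (rule decay2[OF _ _ x])
        show "(\<lambda>z. FB f x k2 z * ef k3 z) integrable_on UNIV" using hi by blast
        show "cmod (FB f x k2 t * ef k3 t) \<le> C / norm (t, x) ^ 3" if "norm (t, x) > 1" for t
          using C[of x t] that nsw[of t x] by (simp add: norm_mult)
      qed
      then show ?thesis using integral_unique[OF hi] by simp
    qed
    then show "\<exists>C. \<forall>x. \<bar>x\<bar> > 1 \<longrightarrow> cmod (FH f x k2 k3) \<le> C / x\<^sup>2" by blast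
  qed
  have c1: "\<forall>k1 k2 z. k1 \<noteq> 0 \<and> k2 \<noteq> 0 \<longrightarrow>
      ((\<lambda>y. FA f k1 y z * ef k2 y) has_integral FF f k1 k2 z) UNIV \<and>
      ((\<lambda>x. FB f x k2 z * ef k1 x) has_integral FF f k1 k2 z) UNIV"
    using instFF(2,3)[OF assms] by blast
  have c2: "\<forall>k1 y k3. k1 \<noteq> 0 \<and> k3 \<noteq> 0 \<longrightarrow>
      ((\<lambda>z. FA f k1 y z * ef k3 z) has_integral FG f k1 y k3) UNIV \<and>
      ((\<lambda>x. FC f x y k3 * ef k1 x) has_integral FG f k1 y k3) UNIV"
    using instFG(2,3)[OF assms] by blast
  have c3: "\<forall>x k2 k3. k2 \<noteq> 0 \<and> k3 \<noteq> 0 \<longrightarrow>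
      ((\<lambda>z. FB f x k2 z * ef k3 z) has_integral FH f x k2 k3) UNIV \<and>
      ((\<lambda>y. FC f x y k3 * ef k2 y) has_integral FH f x k2 k3) UNIV"
    using instFH(2,3)[OF assms] by blast
  show ?thesis using a1 a2 a3 a4 a5 a6 b1 b2 b3 b4 b5 b6 c1 c2 c3 by blast
qed

end
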